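(* Let $M$ be a simple triangular grid graph and let $g,g'$ be nodes of $M$. For $q\in\{x,y,z\}$ let $d_q:=d_{M,q}(g,g')$ and $$P_q:=\{v\in M : d_{M,q}(g,v)=\lceil d_q/2\rceil \text{ and } d_{M,q}(g',v)=\lfloor d_q/2\rfloor\}.$$ Then for each $q\in\{x,y,z\}$, $P_q$ is a $q$-portal of $M$, and every $gg'$-path in $M$ contains a node of $P_q$.
   Context: $G_\Delta$ is the infinite regular triangular grid graph; its edges are parallel to three axes: the $x$-axis (East–West), the $y$-axis (NNE–SSW) and the $z$-axis (NNW–SSE). A triangular grid graph is the subgraph of $G_\Delta$ induced by a finite node set such that it is connected; it is simple if the subgraph of $G_\Delta$ induced by the complement of its node set is connected (i.e. no inner holes). For a triangular grid graph $\Gamma=(V_\Gamma,E_\Gamma)$ and $E_x\subseteq E_\Gamma$ the edges parallel to the $x$-axis, the $x$-portals of $\Gamma$ are the connected components of $(V_\Gamma,E_x)$; $y$- and $z$-portals are defined analogously. $\operatorname{portal}_q(u)$ denotes the $q$-portal containing $u$. The $q$-portal graph $\mathcal P_q$ has a node for each $q$-portal, two portals being adjacent iff some edge of $\Gamma$ joins them. The $q$-distance $d_{\Gamma,q}(u,v)$ is the distance between $\operatorname{portal}_q(u)$ and $\operatorname{portal}_q(v)$ in $\mathcal P_q$. *)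

theory Defs
  imports Main
begin

text \<open>Nodes of the infinite triangular grid: axial coordinates (a,b) standing for the
point a*e1 + b*e2 with e1 = (1,0) (East) and e2 = (1/2, sqrt 3/2) (NNE).
x-axis edges: (a,b)--(a+1,b); y-axis edges: (a,b)--(a,b+1);
z-axis edges: (a,b)--(a-1,b+1) (NNW-SSE).\<close>

type_synonym node = "int \<times> int"

datatype axis = AX | AY | AZ

fun axis_adj :: "axis \<Rightarrow> node \<Rightarrow> node \<Rightarrow> bool" where
  "axis_adj AX (a,b) (c,d) \<longleftrightarrow> d = b \<and> \<bar>c - a\<bar> = 1"
| "axis_adj AY (a,b) (c,d) \<longleftrightarrow> c = a \<and> \<bar>d - b\<bar> = 1"
| "axis_adj AZ (a,b) (c,d) \<longleftrightarrow> (c = a - 1 \<and> d = b + 1) \<or> (c = a + 1 \<and> d = b - 1)"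

definition grid_adj :: "node \<Rightarrow> node \<Rightarrow> bool" where
  "grid_adj u v \<longleftrightarrow> (\<exists>q. axis_adj q u v)"

definition induced_connected :: "node set \<Rightarrow> bool" where
  "induced_connected S \<longleftrightarrow>
     (\<forall>u\<in>S. \<forall>v\<in>S. (\<lambda>a b. a \<in> S \<and> b \<in> S \<and> grid_adj a b)\<^sup>*\<^sup>* u v)"

definition tri_grid_graph :: "node set \<Rightarrow> bool" where
  "tri_grid_graph V \<longleftrightarrow> finite V \<and> V \<noteq> {} \<and> induced_connected V"

definition simple_tri_grid_graph :: "node set \<Rightarrow> bool" where
  "simple_tri_grid_graph V \<longleftrightarrow> tri_grid_graph V \<and> induced_connected (- V)"

definition portal :: "axis \<Rightarrow> node set \<Rightarrow> node \<Rightarrow> node set" where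
  "portal q V u = {v. (\<lambda>a b. a \<in> V \<and> b \<in> V \<and> axis_adj q a b)\<^sup>*\<^sup>* u v \<and> v \<in> V}"

definition is_portal :: "axis \<Rightarrow> node set \<Rightarrow> node set \<Rightarrow> bool" where
  "is_portal q V P \<longleftrightarrow> (\<exists>u\<in>V. P = portal q V u)"

definition portal_adj :: "axis \<Rightarrow> node set \<Rightarrow> node set \<Rightarrow> node set \<Rightarrow> bool" where
  "portal_adj q V P Q \<longleftrightarrow> is_portal q V P \<and> is_portal q V Q \<and> P \<noteq> Q \<and>
     (\<exists>a\<in>P. \<exists>b\<in>Q. grid_adj a b)"

definition qdist :: "axis \<Rightarrow> node set \<Rightarrow> node \<Rightarrow> node \<Rightarrow> nat" where
  "qdist q V u v = (LEAST n. (portal_adj q V ^^ n) (portal q V u) (portal q V v))"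

definition grid_path :: "node set \<Rightarrow> node \<Rightarrow> node \<Rightarrow> node list \<Rightarrow> bool" where
  "grid_path V u v p \<longleftrightarrow> p \<noteq> [] \<and> hd p = u \<and> last p = v \<and> set p \<subseteq> V \<and>
     (\<forall>i. Suc i < length p \<longrightarrow> grid_adj (p ! i) (p ! Suc i))"

end

theory Submission
  imports Defs
begin

fun chain :: "('a \<Rightarrow> 'a \<Rightarrow> bool) \<Rightarrow> 'a list \<Rightarrow> bool" where
  "chain R (a # b # xs) = (R a b \<and> chain R (b # xs))"
| "chain R _ = True"

fun par :: "('a \<Rightarrow> 'a \<Rightarrow> bool) \<Rightarrow> 'a list \<Rightarrow> bool" where
  "par E (a # b # xs) = (E a b \<noteq> par E (b # xs))"
| "par E _ = False"

lemma par_xor: "par (\<lambda>a b. E1 a b \<noteq> E2 a b) xs = (par E1 xs \<noteq> par E2 xs)"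
  by (induction E1 xs rule: par.induct) auto

lemma par_bnd: "xs \<noteq> [] \<Longrightarrow> par (\<lambda>a b. (a \<in> X) \<noteq> (b \<in> X)) xs = ((hd xs \<in> X) \<noteq> (last xs \<in> X))"
  by (induction "\<lambda>a b. (a \<in> X) \<noteq> (b \<in> X)" xs rule: par.induct) auto

lemma par_cong: "chain P xs \<Longrightarrow> (\<And>a b. P a b \<Longrightarrow> E a b = E' a b) \<Longrightarrow> par E xs = par E' xs"
  by (induction E xs rule: par.induct) auto

lemma par_false: "chain (\<lambda>a b. \<not> E a b) xs \<Longrightarrow> par E xs = False"
  by (induction E xs rule: par.induct) auto

lemma par_append: "xs \<noteq> [] \<Longrightarrow> ys \<noteq> [] \<Longrightarrow> last xs = hd ys \<Longrightarrow>
   par E (xs @ tl ys) = (par E xs \<noteq> par E ys)"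
proof (induction E xs rule: par.induct)
  case (1 E a b xs)
  then show ?case by auto
next
  case ("2_1" E)
  then show ?case by simp
next
  case ("2_2" E v)
  then show ?case by (cases ys; cases "tl ys") auto
qed

lemma chain_append: "xs \<noteq> [] \<Longrightarrow> ys \<noteq> [] \<Longrightarrow> last xs = hd ys \<Longrightarrow>
   chain R xs \<Longrightarrow> chain R ys \<Longrightarrow> chain R (xs @ tl ys)"
proof (induction R xs rule: chain.induct)
  case (1 R a b xs)
  then show ?case by auto
next
  case ("2_1" R)
  then show ?case by simp
next
  case ("2_2" R v)
  then show ?case by (cases ys) auto
qed

lemma chain_conj: "chain P xs \<Longrightarrow> (\<forall>x\<in>set xs. Q x) \<Longrightarrow> chain (\<lambda>a b. P a b \<and> Q a \<and> Q b) xs"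
  by (induction P xs rule: chain.induct) auto

lemma chain_mono: "chain P xs \<Longrightarrow> (\<And>a b. P a b \<Longrightarrow> P' a b) \<Longrightarrow> chain P' xs"
  by (induction P xs rule: chain.induct) auto

lemma chain_set: "chain (\<lambda>a b. a \<in> S \<and> b \<in> S \<and> R a b) xs \<Longrightarrow> hd xs \<in> S \<Longrightarrow> set xs \<subseteq> S"
  by (induction "\<lambda>a b. a \<in> S \<and> b \<in> S \<and> R a b" xs rule: chain.induct) auto

lemma rtranclp_chain: "R\<^sup>*\<^sup>* a b \<Longrightarrow> \<exists>xs. xs \<noteq> [] \<and> hd xs = a \<and> last xs = b \<and> chain R xs"
proof (induction rule: rtranclp_induct)
  case base
  then show ?case by (intro exI[of _ "[a]"]) auto
next
  case (step y z)
  then obtain xs where xs: "xs \<noteq> []" "hd xs = a" "last xs = y" "chain R xs" by blast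
  have "chain R (xs @ tl [y, z])"
    by (rule chain_append) (use xs step in auto)
  then show ?case using xs by (intro exI[of _ "xs @ [z]"]) auto
qed

fun rayE :: "node \<Rightarrow> node \<Rightarrow> node \<Rightarrow> bool" where
  "rayE (c, s) u v = ((snd u = s \<and> fst u > c \<and> snd v = s + 1) \<or> (snd v = s \<and> fst v > c \<and> snd u = s + 1))"

definition wind :: "node list \<Rightarrow> node \<Rightarrow> bool" where
  "wind D p = par (rayE p) D"


lemma grid_adj_axes: "grid_adj u v \<longleftrightarrow> axis_adj AX u v \<or> axis_adj AY u v \<or> axis_adj AZ u v"
  unfolding grid_adj_def by (metis axis.exhaust)

lemma abs1: "\<bar>(x::int)\<bar> = 1 \<longleftrightarrow> x = 1 \<or> x = -1" by arith

lemma grid_adj_cases: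
  "grid_adj (a, b) (c, d) \<longleftrightarrow>
    (d = b \<and> (c = a + 1 \<or> c = a - 1)) \<or> (c = a \<and> (d = b + 1 \<or> d = b - 1)) \<or>
    (c = a - 1 \<and> d = b + 1) \<or> (c = a + 1 \<and> d = b - 1)"
  unfolding grid_adj_axes by (auto simp: abs1)

lemma grid_adj_sym: "grid_adj u v \<Longrightarrow> grid_adj v u"
  by (cases u; cases v) (auto simp: grid_adj_cases)

lemma edge1: "grid_adj a b \<Longrightarrow> a \<noteq> (c+1, s) \<Longrightarrow> b \<noteq> (c+1, s) \<Longrightarrow>
   rayE (c, s) a b = rayE (c+1, s) a b"
  apply (cases a; cases b)
  apply (simp only: grid_adj_cases)
  apply (elim disjE conjE)
  by auto

lemma edge2: "grid_adj a b \<Longrightarrow> a \<noteq> (c, s) \<Longrightarrow> b \<noteq> (c, s) \<Longrightarrow> a \<noteq> (c, s+1) \<Longrightarrow> b \<noteq> (c, s+1) \<Longrightarrow>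
   ((a \<in> {v. snd v = s+1 \<and> fst v > c}) \<noteq> (b \<in> {v. snd v = s+1 \<and> fst v > c})) = (rayE (c, s) a b \<noteq> rayE (c, s+1) a b)"
  by (cases a; cases b; simp only: grid_adj_cases; elim disjE conjE; cases "snd a = s"; cases "snd a = s + 1"; cases "snd a = s - 1"; cases "snd a = s + 2"; auto)

lemma edge3: "grid_adj a b \<Longrightarrow> a \<noteq> (c, s) \<Longrightarrow> b \<noteq> (c, s) \<Longrightarrow> a \<noteq> (c-1, s+1) \<Longrightarrow> b \<noteq> (c-1, s+1) \<Longrightarrow>
   ((a \<in> {v. snd v = s+1 \<and> fst v \<ge> c}) \<noteq> (b \<in> {v. snd v = s+1 \<and> fst v \<ge> c})) = (rayE (c, s) a b \<noteq> rayE (c-1, s+1) a b)"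
  by (cases a; cases b; simp only: grid_adj_cases; elim disjE conjE; cases "snd a = s"; cases "snd a = s + 1"; cases "snd a = s - 1"; cases "snd a = s + 2"; auto)

lemma edgeA: "grid_adj a b \<Longrightarrow> a \<noteq> (c-1, r+1) \<Longrightarrow> b \<noteq> (c-1, r+1) \<Longrightarrow> a \<noteq> (c+1, r) \<Longrightarrow> b \<noteq> (c+1, r)
   \<Longrightarrow> a \<noteq> (c, r) \<Longrightarrow> b \<noteq> (c, r) \<Longrightarrow>
   ((a \<in> {v. snd v = r+1 \<and> fst v \<ge> c}) \<noteq> (b \<in> {v. snd v = r+1 \<and> fst v \<ge> c})) = (rayE (c-1, r+1) a b \<noteq> rayE (c+1, r) a b)"
  by (cases a; cases b; simp only: grid_adj_cases; elim disjE conjE; cases "snd a = r"; cases "snd a = r + 1"; cases "snd a = r - 1"; cases "snd a = r + 2"; auto)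

lemma edgeC: "grid_adj a b \<Longrightarrow> a \<noteq> (x1, r+1) \<Longrightarrow> b \<noteq> (x1, r+1) \<Longrightarrow> a \<noteq> (x2, r-1) \<Longrightarrow> b \<noteq> (x2, r-1)
   \<Longrightarrow> a \<notin> {(y, r) |y. l \<le> y \<and> y \<le> h} \<Longrightarrow> b \<notin> {(y, r) |y. l \<le> y \<and> y \<le> h} \<Longrightarrow>
   l \<le> h \<Longrightarrow> l - 1 \<le> x1 \<Longrightarrow> x1 \<le> h \<Longrightarrow> l \<le> x2 \<Longrightarrow> x2 \<le> h + 1 \<Longrightarrow>
   ((a \<in> {v. (snd v = r+1 \<and> fst v \<ge> x1+1) \<or> (snd v = r \<and> fst v \<ge> x2)}) \<noteq>
    (b \<in> {v. (snd v = r+1 \<and> fst v \<ge> x1+1) \<or> (snd v = r \<and> fst v \<ge> x2)})) = (rayE (x1, r+1) a b \<noteq> rayE (x2, r-1) a b)"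
  by (cases a; cases b; simp only: grid_adj_cases; elim disjE conjE; cases "snd a = r"; cases "snd a = r + 1"; cases "snd a = r - 1"; cases "snd a = r + 2"; auto)


definition closedw :: "node list \<Rightarrow> bool" where
  "closedw D \<longleftrightarrow> D \<noteq> [] \<and> hd D = last D \<and> chain grid_adj D"

lemma W1x: assumes "chain grid_adj D" "(c+1, s) \<notin> set D"
  shows "wind D (c, s) = wind D (c+1, s)"
proof -
  have ch: "chain (\<lambda>a b. grid_adj a b \<and> a \<noteq> (c+1,s) \<and> b \<noteq> (c+1,s)) D"
    using chain_conj[OF assms(1), of "\<lambda>x. x \<noteq> (c+1,s)"] assms(2) by auto
  show ?thesis unfolding wind_def
    by (rule par_cong[OF ch]) (use edge1 in blast)
qed

lemma W1y: assumes "closedw D" "(c, s) \<notin> set D" "(c, s+1) \<notin> set D"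
  shows "wind D (c, s) = wind D (c, s+1)"
proof -
  have ch: "chain (\<lambda>a b. grid_adj a b \<and> a \<notin> {(c,s),(c,s+1)} \<and> b \<notin> {(c,s),(c,s+1)}) D"
    using chain_conj[of grid_adj D "\<lambda>x. x \<notin> {(c,s),(c,s+1)}"] assms by (auto simp: closedw_def)
  let ?X = "{v. snd v = s+1 \<and> fst v > c}"
  have A: "par (\<lambda>a b. (a \<in> ?X) \<noteq> (b \<in> ?X)) D = (par (rayE (c, s)) D \<noteq> par (rayE (c, s+1)) D)"
    by (subst par_xor[symmetric], rule par_cong[OF ch]) (use edge2 in blast)
  have B: "par (\<lambda>a b. (a \<in> ?X) \<noteq> (b \<in> ?X)) D = False"
    using par_bnd[of D ?X] assms(1) by (auto simp: closedw_def)
  show ?thesis using A B unfolding wind_def by blast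
qed

lemma W1z: assumes "closedw D" "(c, s) \<notin> set D" "(c-1, s+1) \<notin> set D"
  shows "wind D (c, s) = wind D (c-1, s+1)"
proof -
  have ch: "chain (\<lambda>a b. grid_adj a b \<and> a \<notin> {(c,s),(c-1,s+1)} \<and> b \<notin> {(c,s),(c-1,s+1)}) D"
    using chain_conj[of grid_adj D "\<lambda>x. x \<notin> {(c,s),(c-1,s+1)}"] assms by (auto simp: closedw_def)
  let ?X = "{v. snd v = s+1 \<and> fst v \<ge> c}"
  have A: "par (\<lambda>a b. (a \<in> ?X) \<noteq> (b \<in> ?X)) D = (par (rayE (c, s)) D \<noteq> par (rayE (c-1, s+1)) D)"
    by (subst par_xor[symmetric], rule par_cong[OF ch]) (use edge3 in blast)
  have B: "par (\<lambda>a b. (a \<in> ?X) \<noteq> (b \<in> ?X)) D = False"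
    using par_bnd[of D ?X] assms(1) by (auto simp: closedw_def)
  show ?thesis using A B unfolding wind_def by blast
qed

lemma W1: assumes "closedw D" "grid_adj p p'" "p \<notin> set D" "p' \<notin> set D"
  shows "wind D p = wind D p'"
proof -
  obtain c s where p: "p = (c, s)" by (cases p)
  obtain c' s' where p': "p' = (c', s')" by (cases p')
  have ch: "chain grid_adj D" using assms(1) by (simp add: closedw_def)
  from assms(2) consider "s' = s" "c' = c + 1" | "s' = s" "c' = c - 1" | "c' = c" "s' = s + 1"
    | "c' = c" "s' = s - 1" | "c' = c - 1" "s' = s + 1" | "c' = c + 1" "s' = s - 1"
    unfolding p p' grid_adj_cases by blast
  then show ?thesis
  proof cases
    case 1 then show ?thesis using W1x[OF ch, of c s] assms p p' by simp
  next
    case 2 then show ?thesis using W1x[OF ch, of "c-1" s] assms p p' by simp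
  next
    case 3 then show ?thesis using W1y[OF assms(1), of c s] assms p p' by simp
  next
    case 4 then show ?thesis using W1y[OF assms(1), of c "s-1"] assms p p' by simp
  next
    case 5 then show ?thesis using W1z[OF assms(1), of c s] assms p p' by simp
  next
    case 6 then show ?thesis using W1z[OF assms(1), of "c+1" "s-1"] assms p p' by simp
  qed
qed

definition reach :: "node set \<Rightarrow> node \<Rightarrow> node \<Rightarrow> bool" where
  "reach S = (\<lambda>a b. a \<in> S \<and> b \<in> S \<and> grid_adj a b)\<^sup>*\<^sup>*"

lemma wind_reach: assumes "closedw D" "reach (- set D) u v"
  shows "wind D u = wind D v"
  using assms(2) unfolding reach_def
proof (induction rule: rtranclp_induct)
  case base then show ?case by simp
next
  case (step y z)
  then show ?case using W1[OF assms(1), of y z] by auto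
qed

lemma reach_mono: "reach S u v \<Longrightarrow> S \<subseteq> T \<Longrightarrow> reach T u v"
  unfolding reach_def by (erule rtranclp_mono[THEN predicate2D, rotated]) auto

lemma reach_trans: "reach S u v \<Longrightarrow> reach S v w \<Longrightarrow> reach S u w"
  unfolding reach_def by auto

lemma reach_step: "u \<in> S \<Longrightarrow> v \<in> S \<Longrightarrow> grid_adj u v \<Longrightarrow> reach S u v"
  unfolding reach_def by auto

lemma reach_sym: "reach S u v \<Longrightarrow> reach S v u"
  unfolding reach_def
proof (induction rule: rtranclp_induct)
  case base then show ?case by simp
next
  case (step y z)
  then show ?case using grid_adj_sym
    by (metis (mono_tags, lifting) converse_rtranclp_into_rtranclp)
qed

lemma reach_row_up0: assumes "x \<le> x'" shows "(\<forall>y. x \<le> y \<and> y \<le> x' \<longrightarrow> (y, b) \<in> S) \<longrightarrow> reach S (x, b) (x', b)"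
  using assms
proof (induction x' rule: int_ge_induct)
  case base then show ?case by (simp add: reach_def)
next
  case (step i)
  show ?case
  proof
    assume H: "\<forall>y. x \<le> y \<and> y \<le> i + 1 \<longrightarrow> (y, b) \<in> S"
    have "reach S (x, b) (i, b)" using step H by auto
    moreover have "reach S (i, b) (i+1, b)"
      using step H by (intro reach_step) (auto simp: grid_adj_cases)
    ultimately show "reach S (x, b) (i + 1, b)" by (rule reach_trans)
  qed
qed

lemma reach_row_up: "(\<And>y. x \<le> y \<Longrightarrow> y \<le> x' \<Longrightarrow> (y, b) \<in> S) \<Longrightarrow> x \<le> x' \<Longrightarrow> reach S (x, b) (x', b)"
  using reach_row_up0 by blast

lemma reach_row: "(\<And>y. min x x' \<le> y \<Longrightarrow> y \<le> max x x' \<Longrightarrow> (y, b) \<in> S) \<Longrightarrow> reach S (x, b) (x', b)"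
  apply (cases "x \<le> x'")
  subgoal by (rule reach_row_up) auto
  subgoal by (rule reach_sym, rule reach_row_up) auto
  done


lemma chain_nth: "chain P xs \<longleftrightarrow> (\<forall>i. Suc i < length xs \<longrightarrow> P (xs!i) (xs!Suc i))"
proof (induction P xs rule: chain.induct)
  case (1 R a b xs)
  have "(\<forall>i. Suc i < length (a # b # xs) \<longrightarrow> R ((a # b # xs) ! i) ((a # b # xs) ! Suc i)) \<longleftrightarrow>
        R a b \<and> (\<forall>i. Suc i < length (b # xs) \<longrightarrow> R ((b # xs) ! i) ((b # xs) ! Suc i))"
    apply (rule iffI)
     apply (intro conjI allI impI)
      apply (drule spec[of _ 0]; simp)
     apply (drule_tac x="Suc i" in spec; simp)
    apply (intro allI impI)
    apply (case_tac i; simp)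
    done
  then show ?case using 1 by simp
qed auto

lemma chain_map_upt: "(\<And>i. Suc i < n \<Longrightarrow> P (f i) (f (Suc i))) \<Longrightarrow> chain P (map f [0..<n])"
  unfolding chain_nth by simp

lemma axis_adj_sym: "axis_adj q a b \<Longrightarrow> axis_adj q b a"
  by (cases q; cases a; cases b) auto

lemma portal_self: "u \<in> V \<Longrightarrow> u \<in> portal q V u"
  unfolding portal_def by simp

lemma portal_subset: "portal q V u \<subseteq> V"
  unfolding portal_def by auto

lemma portal_rel_sym: "(\<lambda>a b. a \<in> V \<and> b \<in> V \<and> axis_adj q a b)\<^sup>*\<^sup>* u v \<Longrightarrow>
   (\<lambda>a b. a \<in> V \<and> b \<in> V \<and> axis_adj q a b)\<^sup>*\<^sup>* v u"
proof (induction rule: rtranclp_induct)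
  case base then show ?case by simp
next
  case (step y z)
  then show ?case using axis_adj_sym
    by (metis (mono_tags, lifting) converse_rtranclp_into_rtranclp)
qed

lemma portal_eq: assumes "v \<in> portal q V u" shows "portal q V v = portal q V u"
proof -
  let ?R = "\<lambda>a b. a \<in> V \<and> b \<in> V \<and> axis_adj q a b"
  have uv: "?R\<^sup>*\<^sup>* u v" using assms unfolding portal_def by simp
  have vu: "?R\<^sup>*\<^sup>* v u" using portal_rel_sym[OF uv] .
  show ?thesis
  proof
    show "portal q V v \<subseteq> portal q V u"
      unfolding portal_def using uv by (auto dest: rtranclp_trans[OF uv])
    show "portal q V u \<subseteq> portal q V v"
      unfolding portal_def using vu by (auto dest: rtranclp_trans[OF vu])
  qed
qed

lemma portal_disj: "w \<in> portal q V u \<Longrightarrow> w \<in> portal q V v \<Longrightarrow> portal q V u = portal q V v"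
  using portal_eq by metis

lemma portalAX_fwd:
  assumes "(\<lambda>a b. a \<in> M \<and> b \<in> M \<and> axis_adj AX a b)\<^sup>*\<^sup>* (a, b) v" "(a, b) \<in> M"
  shows "snd v = b \<and> (\<forall>y. min a (fst v) \<le> y \<and> y \<le> max a (fst v) \<longrightarrow> (y, b) \<in> M)"
  using assms(1)
proof (induction rule: rtranclp_induct)
  case base
  then show ?case using assms(2) by auto
next
  case (step y z)
  obtain y1 y2 where y: "y = (y1, y2)" by (cases y)
  obtain z1 z2 where z: "z = (z1, z2)" by (cases z)
  from step y z have zz: "z2 = y2" "z1 = y1 + 1 \<or> z1 = y1 - 1" "z \<in> M" by (auto simp: abs1)
  show ?case
  proof (intro conjI allI impI)
    show "snd z = b" using step y z zz by simp
  next
    fix t assume t: "min a (fst z) \<le> t \<and> t \<le> max a (fst z)"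
    show "(t, b) \<in> M"
    proof (cases "t = z1")
      case True
      have "snd z = b" using step.IH step.hyps(2) zz y z by simp
      then show ?thesis using True zz(3) z by simp
    next
      case False
      then have "min a y1 \<le> t \<and> t \<le> max a y1" using t zz(2) z by (auto simp: min_def max_def split: if_splits)
      then show ?thesis using step.IH y by simp
    qed
  qed
qed

lemma portalAX_bwd0: assumes "x \<le> x'"
  shows "(\<forall>y. x \<le> y \<and> y \<le> x' \<longrightarrow> (y, b) \<in> M) \<longrightarrow>
     (\<lambda>a b. a \<in> M \<and> b \<in> M \<and> axis_adj AX a b)\<^sup>*\<^sup>* (x, b) (x', b)"
  using assms
proof (induction x' rule: int_ge_induct)
  case base then show ?case by simp
next
  case (step i)
  show ?case
  proof
    assume H: "\<forall>y. x \<le> y \<and> y \<le> i + 1 \<longrightarrow> (y, b) \<in> M"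
    have "(\<lambda>a b. a \<in> M \<and> b \<in> M \<and> axis_adj AX a b)\<^sup>*\<^sup>* (x, b) (i, b)" using step H by auto
    moreover have "(i, b) \<in> M" "(i+1, b) \<in> M" using H step by auto
    ultimately show "(\<lambda>a b. a \<in> M \<and> b \<in> M \<and> axis_adj AX a b)\<^sup>*\<^sup>* (x, b) (i + 1, b)"
      by (auto intro: rtranclp.rtrancl_into_rtrancl)
  qed
qed

lemma portalAX_char:
  "(x, b') \<in> portal AX M (a, b) \<longleftrightarrow> b' = b \<and> (\<forall>y. min a x \<le> y \<and> y \<le> max a x \<longrightarrow> (y, b) \<in> M)"
proof
  assume H: "(x, b') \<in> portal AX M (a, b)"
  then have "(a, b) \<in> M"
    unfolding portal_def by (metis (no_types, lifting) converse_rtranclpE mem_Collect_eq)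
  then show "b' = b \<and> (\<forall>y. min a x \<le> y \<and> y \<le> max a x \<longrightarrow> (y, b) \<in> M)"
    using portalAX_fwd[of M a b "(x, b')"] H unfolding portal_def by auto
next
  assume H: "b' = b \<and> (\<forall>y. min a x \<le> y \<and> y \<le> max a x \<longrightarrow> (y, b) \<in> M)"
  show "(x, b') \<in> portal AX M (a, b)"
  proof (cases "a \<le> x")
    case True
    then show ?thesis using portalAX_bwd0[of a x b M] H unfolding portal_def by auto
  next
    case False
    then have "(\<lambda>a b. a \<in> M \<and> b \<in> M \<and> axis_adj AX a b)\<^sup>*\<^sup>* (x, b) (a, b)"
      using portalAX_bwd0[of x a b M] H by auto
    then show ?thesis using portal_rel_sym H False unfolding portal_def by fastforce
  qed
qed

lemma portalAX_interval:
  assumes "finite M" "w \<in> M"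
  shows "\<exists>l h. l \<le> fst w \<and> fst w \<le> h \<and> portal AX M w = {(y, snd w) |y. l \<le> y \<and> y \<le> h} \<and>
           (l - 1, snd w) \<notin> M \<and> (h + 1, snd w) \<notin> M"
proof -
  obtain a b where w: "w = (a, b)" by (cases w)
  let ?P = "portal AX M w"
  let ?C = "fst ` ?P"
  have fin: "finite ?C" by (intro finite_imageI finite_subset[OF portal_subset assms(1)])
  have aC: "a \<in> ?C" using portal_self[OF assms(2)] w by (metis fst_conv imageI)
  define l where "l = Min ?C"
  define h where "h = Max ?C"
  have ne: "?C \<noteq> {}" using aC by blast
  have lC: "l \<in> ?C" "h \<in> ?C" unfolding l_def h_def using Min_in[OF fin ne] Max_in[OF fin ne] by auto
  have la: "l \<le> a" "a \<le> h" using fin aC l_def h_def by auto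
  have rowP: "\<And>v. v \<in> ?P \<Longrightarrow> snd v = b"
  proof -
    fix v assume "v \<in> ?P"
    then have "(fst v, snd v) \<in> portal AX M (a, b)" using w by simp
    then show "snd v = b" unfolding portalAX_char by simp
  qed
  have lP: "(l, b) \<in> ?P"
  proof -
    obtain v where "v \<in> ?P" "l = fst v" using lC(1) by blast
    then show ?thesis using rowP by (metis prod.collapse)
  qed
  have hP: "(h, b) \<in> ?P"
  proof -
    obtain v where "v \<in> ?P" "h = fst v" using lC(2) by blast
    then show ?thesis using rowP by (metis prod.collapse)
  qed
  have lM: "\<And>y. l \<le> y \<Longrightarrow> y \<le> a \<Longrightarrow> (y, b) \<in> M" using lP la portalAX_char w by auto
  have hM: "\<And>y. a \<le> y \<Longrightarrow> y \<le> h \<Longrightarrow> (y, b) \<in> M" using hP la portalAX_char w by auto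
  have eq: "?P = {(y, b) |y. l \<le> y \<and> y \<le> h}"
  proof
    show "?P \<subseteq> {(y, b) |y. l \<le> y \<and> y \<le> h}"
    proof
      fix v assume v: "v \<in> ?P"
      then have "fst v \<in> ?C" by blast
      then have "l \<le> fst v" "fst v \<le> h" using fin l_def h_def by auto
      then show "v \<in> {(y, b) |y. l \<le> y \<and> y \<le> h}" using rowP[OF v] by (cases v) auto
    qed
  next
    show "{(y, b) |y. l \<le> y \<and> y \<le> h} \<subseteq> ?P"
    proof
      fix v assume "v \<in> {(y, b) |y. l \<le> y \<and> y \<le> h}"
      then obtain y where v: "v = (y, b)" "l \<le> y" "y \<le> h" by auto
      have "\<forall>t. min a y \<le> t \<and> t \<le> max a y \<longrightarrow> (t, b) \<in> M"
      proof (intro allI impI)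
        fix t assume t: "min a y \<le> t \<and> t \<le> max a y"
        show "(t, b) \<in> M"
        proof (cases "t \<le> a")
          case True then show ?thesis using lM[of t] t v la by (auto simp: min_def max_def split: if_splits)
        next
          case False then show ?thesis using hM[of t] t v la by (auto simp: min_def max_def split: if_splits)
        qed
      qed
      then show "v \<in> ?P" using portalAX_char w v by auto
    qed
  qed
  have lout: "(l - 1, b) \<notin> M"
  proof
    assume "(l - 1, b) \<in> M"
    then have "\<forall>t. min a (l-1) \<le> t \<and> t \<le> max a (l-1) \<longrightarrow> (t, b) \<in> M"
    proof (intro allI impI)
      fix t assume t: "min a (l-1) \<le> t \<and> t \<le> max a (l-1)"
      show "(t, b) \<in> M"
      proof (cases "t = l - 1")
        case True then show ?thesis using \<open>(l - 1, b) \<in> M\<close> by simp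
      next
        case False then show ?thesis using lM[of t] t la by (auto simp: min_def max_def split: if_splits)
      qed
    qed
    then have "(l - 1, b) \<in> ?P" using portalAX_char w by auto
    then have "l - 1 \<in> ?C" by (metis fst_conv imageI)
    then have "l \<le> l - 1" unfolding l_def using Min_le[OF fin] by blast
    then show False by simp
  qed
  have hout: "(h + 1, b) \<notin> M"
  proof
    assume "(h + 1, b) \<in> M"
    then have "\<forall>t. min a (h+1) \<le> t \<and> t \<le> max a (h+1) \<longrightarrow> (t, b) \<in> M"
    proof (intro allI impI)
      fix t assume t: "min a (h+1) \<le> t \<and> t \<le> max a (h+1)"
      show "(t, b) \<in> M"
      proof (cases "t = h + 1")
        case True then show ?thesis using \<open>(h + 1, b) \<in> M\<close> by simp
      next
        case False then show ?thesis using hM[of t] t la by (auto simp: min_def max_def split: if_splits)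
      qed
    qed
    then have "(h + 1, b) \<in> ?P" using portalAX_char w by auto
    then have "h + 1 \<in> ?C" by (metis fst_conv imageI)
    then have "h + 1 \<le> h" unfolding h_def using Max_ge[OF fin] by blast
    then show False by simp
  qed
  show ?thesis using la eq lout hout w by auto
qed


lemma comp_walk: assumes "induced_connected S" "u \<in> S" "v \<in> S"
  shows "\<exists>\<sigma>. \<sigma> \<noteq> [] \<and> hd \<sigma> = u \<and> last \<sigma> = v \<and> chain grid_adj \<sigma> \<and> set \<sigma> \<subseteq> S"
proof -
  from assms(1) have H: "\<forall>u\<in>S. \<forall>v\<in>S. (\<lambda>a b. a \<in> S \<and> b \<in> S \<and> grid_adj a b)\<^sup>*\<^sup>* u v"
    unfolding induced_connected_def .
  have "(\<lambda>a b. a \<in> S \<and> b \<in> S \<and> grid_adj a b)\<^sup>*\<^sup>* u v"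
    using H[rule_format, OF assms(2) assms(3)] .
  then obtain xs where xs: "xs \<noteq> []" "hd xs = u" "last xs = v" "chain (\<lambda>a b. a \<in> S \<and> b \<in> S \<and> grid_adj a b) xs"
    using rtranclp_chain[of "\<lambda>a b. a \<in> S \<and> b \<in> S \<and> grid_adj a b" u v] by blast
  have "set xs \<subseteq> S" using chain_set[OF xs(4)] xs(2) assms(2) by simp
  moreover have "chain grid_adj xs" using chain_mono[OF xs(4)] by simp
  ultimately show ?thesis using xs by (intro exI[of _ xs]) simp
qed

lemma chain_Cons: "ys \<noteq> [] \<Longrightarrow> P x (hd ys) \<Longrightarrow> chain P ys \<Longrightarrow> chain P (x # ys)"
  by (cases ys) auto

lemma closedw_app: assumes "\<sigma> \<noteq> []" "W \<noteq> []" "tl W \<noteq> []" "last \<sigma> = hd W" "hd \<sigma> = last W"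
  "chain grid_adj \<sigma>" "chain grid_adj W"
  shows "closedw (\<sigma> @ tl W)"
proof -
  have "hd (\<sigma> @ tl W) = hd \<sigma>" using assms(1) by simp
  moreover have "last (\<sigma> @ tl W) = last (tl W)" using assms(3) by simp
  moreover have "last (tl W) = last W" using assms(3) by (simp add: last_tl)
  moreover have "chain grid_adj (\<sigma> @ tl W)" using chain_append[OF assms(1,2,4,6,7)] .
  ultimately show ?thesis unfolding closedw_def using assms(1,5) by simp
qed

lemma wind_app: assumes "\<sigma> \<noteq> []" "W \<noteq> []" "last \<sigma> = hd W"
  shows "wind (\<sigma> @ tl W) p = (par (rayE p) \<sigma> \<noteq> par (rayE p) W)"
  unfolding wind_def using par_append[OF assms] .

lemma set_app_tl: "set (\<sigma> @ tl W) \<subseteq> set \<sigma> \<union> set W"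
  by (cases W) auto

lemma geo_a:
  assumes conn: "induced_connected (- M)"
    and QM: "\<And>y. l \<le> y \<Longrightarrow> y \<le> h \<Longrightarrow> (y, r) \<in> M"
    and el: "(l - 1, r) \<notin> M"
    and c1: "x1 < c" and c2: "c < x2" and gap: "(c, r+1) \<notin> M"
    and row1: "\<And>y. x1 \<le> y \<Longrightarrow> y \<le> c - 1 \<Longrightarrow> (y, r+1) \<in> M"
    and u2: "(x2, r+1) \<in> M" and hx1: "l - 1 \<le> x1" and hx2: "x2 \<le> h"
    and R: "reach (M - {(y, r) |y. l \<le> y \<and> y \<le> h}) (x1, r+1) (x2, r+1)"
  shows False
proof -
  have e1: "(l-1, r) \<in> -M" using el by simp
  have e2: "(c, r+1) \<in> -M" using gap by simp
  obtain \<sigma> where \<sigma>: "\<sigma> \<noteq> []" "hd \<sigma> = (l-1, r)" "last \<sigma> = (c, r+1)" "chain grid_adj \<sigma>" "set \<sigma> \<subseteq> -M"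
    using comp_walk[OF conn e1 e2] by blast
  define n where "n = nat (c - l + 2)"
  define f where "f = (\<lambda>i::nat. (c - int i, r))"
  define W where "W = (c, r+1) # map f [0..<n]"
  have n2: "n \<ge> 2" using c1 hx1 unfolding n_def by simp
  have mapne: "map f [0..<n] \<noteq> []" using n2 by simp
  have hdmap: "hd (map f [0..<n]) = (c, r)" using n2 by (simp add: f_def hd_map)
  have lastW: "last W = (l-1, r)"
  proof -
    have "last W = last (map f [0..<n])" using mapne W_def by simp
    also have "\<dots> = f (n - 1)" using n2 by (simp add: last_map)
    also have "\<dots> = (l - 1, r)" using n2 unfolding f_def n_def by simp
    finally show ?thesis .
  qed
  have setW: "\<And>z. z \<in> set W \<Longrightarrow> z = (c, r+1) \<or> (snd z = r \<and> l - 1 \<le> fst z \<and> fst z \<le> c)"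
  proof -
    fix z assume "z \<in> set W"
    then have "z = (c, r+1) \<or> (\<exists>i<n. z = f i)" unfolding W_def by auto
    then show "z = (c, r+1) \<or> (snd z = r \<and> l - 1 \<le> fst z \<and> fst z \<le> c)"
    proof
      assume "\<exists>i<n. z = f i"
      then obtain i where i: "i < n" "z = f i" by blast
      have "int i \<le> c - l + 1" using i(1) unfolding n_def by linarith
      then show ?thesis unfolding i(2) f_def by simp
    qed simp
  qed
  let ?E = "\<lambda>a b. (a = (c, r+1) \<and> b = (c, r)) \<or> (snd a = r \<and> snd b = r \<and> fst b = fst a - 1)"
  have chmap: "chain ?E (map f [0..<n])"
    by (rule chain_map_upt) (simp add: f_def)
  have chW: "chain ?E W"
    unfolding W_def by (rule chain_Cons[OF mapne _ chmap]) (simp add: hdmap)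
  have Egrid: "\<And>a b. ?E a b \<Longrightarrow> grid_adj a b"
  proof -
    fix a b assume E: "?E a b"
    obtain a1 a2 where a: "a = (a1, a2)" by (cases a)
    obtain b1 b2 where b: "b = (b1, b2)" by (cases b)
    show "grid_adj a b" using E unfolding a b grid_adj_cases by auto
  qed
  have chW': "chain grid_adj W"
    by (rule chain_mono[OF chW Egrid])
  have tlW: "tl W \<noteq> []" using mapne W_def by simp
  define D where "D = \<sigma> @ tl W"
  have hdW: "hd W = (c, r+1)" unfolding W_def by simp
  have Wne0: "W \<noteq> []" unfolding W_def by simp
  have cl: "closedw D" unfolding D_def
    by (rule closedw_app[OF \<sigma>(1) Wne0 tlW]) (simp_all add: \<sigma>(2,3,4) hdW lastW chW')
  have setD: "\<And>z. z \<in> set D \<Longrightarrow> z \<notin> M \<or> (snd z = r \<and> l - 1 \<le> fst z \<and> fst z \<le> c)"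
  proof -
    fix z assume "z \<in> set D"
    then have "z \<in> set \<sigma> \<or> z \<in> set W" using set_app_tl[of \<sigma> W] unfolding D_def by auto
    then show "z \<notin> M \<or> (snd z = r \<and> l - 1 \<le> fst z \<and> fst z \<le> c)"
    proof
      assume "z \<in> set \<sigma>" then show ?thesis using \<sigma>(5) by auto
    next
      assume "z \<in> set W" then have "z = (c, r+1) \<or> (snd z = r \<and> l - 1 \<le> fst z \<and> fst z \<le> c)" by (rule setW)
      then show ?thesis using gap by auto
    qed
  qed
  define v1 where "v1 = (c - 1, r + 1)"
  define v2 where "v2 = (c + 1, r)"
  have v1M: "v1 \<in> M" unfolding v1_def using row1 c1 by simp
  have v2M: "v2 \<in> M" unfolding v2_def using QM c1 c2 hx1 hx2 by simp
  have crM: "(c, r) \<in> M" using QM c1 c2 hx1 hx2 by simp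
  have W1f: "par (rayE v1) W = False"
    by (rule par_false, rule chain_mono[OF chW]) (auto simp: v1_def)
  have W2f: "par (rayE v2) W = False"
    by (rule par_false, rule chain_mono[OF chW]) (auto simp: v2_def)
  let ?X = "{v. snd v = r+1 \<and> fst v \<ge> c}"
  have ch\<sigma>: "chain (\<lambda>a b. grid_adj a b \<and> a \<notin> M \<and> b \<notin> M) \<sigma>"
    using chain_conj[OF \<sigma>(4), of "\<lambda>x. x \<notin> M"] \<sigma>(5) by auto
  have A: "par (\<lambda>a b. (a \<in> ?X) \<noteq> (b \<in> ?X)) \<sigma> = (par (rayE v1) \<sigma> \<noteq> par (rayE v2) \<sigma>)"
  proof (subst par_xor[symmetric], rule par_cong[OF ch\<sigma>])
    fix a b assume ab: "grid_adj a b \<and> a \<notin> M \<and> b \<notin> M"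
    show "((a \<in> ?X) \<noteq> (b \<in> ?X)) = (rayE v1 a b \<noteq> rayE v2 a b)"
      unfolding v1_def v2_def
      by (rule edgeA) (use ab v1M v2M crM in \<open>auto simp: v1_def v2_def\<close>)
  qed
  have B: "par (\<lambda>a b. (a \<in> ?X) \<noteq> (b \<in> ?X)) \<sigma> = True"
    using par_bnd[OF \<sigma>(1), of ?X] \<sigma>(2,3) by simp
  have Wne: "W \<noteq> []" "last \<sigma> = hd W" using Wne0 \<sigma>(3) hdW by simp_all
  have neq: "wind D v1 \<noteq> wind D v2"
    unfolding D_def wind_app[OF \<sigma>(1) Wne] W1f W2f using A B by simp
  let ?S = "- set D"
  have notD: "\<And>z. z \<in> M \<Longrightarrow> snd z \<noteq> r \<or> fst z < l - 1 \<or> fst z > c \<Longrightarrow> z \<in> ?S"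
  proof -
    fix z assume z: "z \<in> M" "snd z \<noteq> r \<or> fst z < l - 1 \<or> fst z > c"
    show "z \<in> ?S"
    proof
      assume "z \<in> set D"
      from setD[OF this] z show False by auto
    qed
  qed
  have r1: "reach ?S v1 (x1, r+1)" unfolding v1_def
  proof (rule reach_row)
    fix y assume "min (c - 1) x1 \<le> y" "y \<le> max (c - 1) x1"
    then have "x1 \<le> y" "y \<le> c - 1" using c1 by auto
    then have "(y, r + 1) \<in> M" by (rule row1)
    then show "(y, r + 1) \<in> ?S" by (rule notD) simp
  qed
  have r2: "reach ?S (x1, r+1) (x2, r+1)"
  proof (rule reach_mono[OF R])
    show "M - {(y, r) |y. l \<le> y \<and> y \<le> h} \<subseteq> ?S"
    proof
      fix z assume z: "z \<in> M - {(y, r) |y. l \<le> y \<and> y \<le> h}"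
      obtain z1 z2 where zz: "z = (z1, z2)" by (cases z)
      show "z \<in> ?S"
      proof
        assume "z \<in> set D"
        then have A: "z2 = r \<and> l - 1 \<le> z1 \<and> z1 \<le> c" using setD z zz by fastforce
        have "z1 \<noteq> l - 1" using el z zz A by auto
        then have "z \<in> {(y, r) |y. l \<le> y \<and> y \<le> h}" using A c2 hx2 zz by auto
        then show False using z by blast
      qed
    qed
  qed
  have x2Q: "(x2, r) \<in> M" using QM c1 c2 hx1 hx2 by simp
  have x2S: "(x2, r) \<in> ?S" by (rule notD[OF x2Q]) (use c2 in simp)
  have u2S: "(x2, r+1) \<in> ?S" by (rule notD[OF u2]) simp
  have r3: "reach ?S (x2, r+1) (x2, r)"
    by (rule reach_step[OF u2S x2S]) (simp add: grid_adj_cases)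
  have r4: "reach ?S (x2, r) v2" unfolding v2_def
  proof (rule reach_row)
    fix y assume "min x2 (c + 1) \<le> y" "y \<le> max x2 (c + 1)"
    then have y: "c + 1 \<le> y" "y \<le> x2" using c2 by auto
    then have "(y, r) \<in> M" using QM[of y] c1 hx1 hx2 by simp
    then show "(y, r) \<in> ?S" by (rule notD) (use y in simp)
  qed
  have "reach ?S v1 v2" using reach_trans[OF reach_trans[OF reach_trans[OF r1 r2] r3] r4] .
  then have "wind D v1 = wind D v2" by (rule wind_reach[OF cl])
  then show False using neq by simp
qed

lemma geo_c:
  assumes conn: "induced_connected (- M)"
    and QM: "\<And>y. l \<le> y \<Longrightarrow> y \<le> h \<Longrightarrow> (y, r) \<in> M"
    and el: "(l - 1, r) \<notin> M" and er: "(h + 1, r) \<notin> M" and lh: "l \<le> h"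
    and u1: "(x1, r+1) \<in> M" and u2: "(x2, r-1) \<in> M"
    and hx1: "l - 1 \<le> x1" "x1 \<le> h" and hx2: "l \<le> x2" "x2 \<le> h + 1"
    and R: "reach (M - {(y, r) |y. l \<le> y \<and> y \<le> h}) (x1, r+1) (x2, r-1)"
  shows False
proof -
  have e1: "(l-1, r) \<in> -M" using el by simp
  have e2: "(h+1, r) \<in> -M" using er by simp
  obtain \<sigma> where \<sigma>: "\<sigma> \<noteq> []" "hd \<sigma> = (l-1, r)" "last \<sigma> = (h+1, r)" "chain grid_adj \<sigma>" "set \<sigma> \<subseteq> -M"
    using comp_walk[OF conn e1 e2] by blast
  define n where "n = nat (h - l + 3)"
  define f where "f = (\<lambda>i::nat. (h + 1 - int i, r))"
  define W where "W = map f [0..<n]"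
  have n2: "n \<ge> 3" using lh unfolding n_def by simp
  have Wne0: "W \<noteq> []" using n2 W_def by simp
  have hdW: "hd W = (h+1, r)" using n2 by (simp add: W_def f_def hd_map)
  have lastW: "last W = (l-1, r)"
  proof -
    have "last W = f (n - 1)" using n2 by (simp add: last_map W_def)
    also have "\<dots> = (l - 1, r)" using n2 unfolding f_def n_def by simp
    finally show ?thesis .
  qed
  have tlW: "tl W \<noteq> []" using n2 W_def by (cases n) auto
  have setW: "\<And>z. z \<in> set W \<Longrightarrow> snd z = r \<and> l - 1 \<le> fst z \<and> fst z \<le> h + 1"
  proof -
    fix z assume "z \<in> set W"
    then obtain i where i: "i < n" "z = f i" unfolding W_def by auto
    have "int i \<le> h - l + 2" using i(1) unfolding n_def by linarith
    then show "snd z = r \<and> l - 1 \<le> fst z \<and> fst z \<le> h + 1" unfolding i(2) f_def by simp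
  qed
  let ?E = "\<lambda>(a::node) (b::node). snd a = r \<and> snd b = r \<and> fst b = fst a - 1"
  have chW: "chain ?E W" unfolding W_def
    by (rule chain_map_upt) (simp add: f_def)
  have Egrid: "\<And>a b. ?E a b \<Longrightarrow> grid_adj a b"
  proof -
    fix a b assume E: "?E a b"
    obtain a1 a2 where a: "a = (a1, a2)" by (cases a)
    obtain b1 b2 where b: "b = (b1, b2)" by (cases b)
    show "grid_adj a b" using E unfolding a b grid_adj_cases by auto
  qed
  have chW': "chain grid_adj W"
    by (rule chain_mono[OF chW Egrid])
  define D where "D = \<sigma> @ tl W"
  have cl: "closedw D" unfolding D_def
    by (rule closedw_app[OF \<sigma>(1) Wne0 tlW]) (simp_all add: \<sigma>(2,3,4) hdW lastW chW')
  have setD: "\<And>z. z \<in> set D \<Longrightarrow> z \<notin> M \<or> (snd z = r \<and> l - 1 \<le> fst z \<and> fst z \<le> h + 1)"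
  proof -
    fix z assume "z \<in> set D"
    then have "z \<in> set \<sigma> \<or> z \<in> set W" using set_app_tl[of \<sigma> W] unfolding D_def by auto
    then show "z \<notin> M \<or> (snd z = r \<and> l - 1 \<le> fst z \<and> fst z \<le> h + 1)"
    proof
      assume "z \<in> set \<sigma>" then show ?thesis using \<sigma>(5) by auto
    next
      assume "z \<in> set W" then show ?thesis using setW by blast
    qed
  qed
  define v1 where "v1 = (x1, r + 1)"
  define v2 where "v2 = (x2, r - 1)"
  have W1f: "par (rayE v1) W = False"
    by (rule par_false, rule chain_mono[OF chW]) (auto simp: v1_def)
  have W2f: "par (rayE v2) W = False"
    by (rule par_false, rule chain_mono[OF chW]) (auto simp: v2_def)
  let ?X = "{v. (snd v = r+1 \<and> fst v \<ge> x1+1) \<or> (snd v = r \<and> fst v \<ge> x2)}"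
  have ch\<sigma>: "chain (\<lambda>a b. grid_adj a b \<and> a \<notin> M \<and> b \<notin> M) \<sigma>"
    using chain_conj[OF \<sigma>(4), of "\<lambda>x. x \<notin> M"] \<sigma>(5) by auto
  have QM': "\<And>z. z \<in> {(y, r) |y. l \<le> y \<and> y \<le> h} \<Longrightarrow> z \<in> M" using QM by auto
  have A: "par (\<lambda>a b. (a \<in> ?X) \<noteq> (b \<in> ?X)) \<sigma> = (par (rayE v1) \<sigma> \<noteq> par (rayE v2) \<sigma>)"
  proof (subst par_xor[symmetric], rule par_cong[OF ch\<sigma>])
    fix a b assume ab: "grid_adj a b \<and> a \<notin> M \<and> b \<notin> M"
    show "((a \<in> ?X) \<noteq> (b \<in> ?X)) = (rayE v1 a b \<noteq> rayE v2 a b)"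
      unfolding v1_def v2_def
      by (rule edgeC) (use ab u1 u2 QM' lh hx1 hx2 in auto)
  qed
  have B: "par (\<lambda>a b. (a \<in> ?X) \<noteq> (b \<in> ?X)) \<sigma> = True"
    using par_bnd[OF \<sigma>(1), of ?X] \<sigma>(2,3) hx2 by simp
  have Wne: "last \<sigma> = hd W" using \<sigma>(3) hdW by simp
  have neq: "wind D v1 \<noteq> wind D v2"
    unfolding D_def wind_app[OF \<sigma>(1) Wne0 Wne] W1f W2f using A B by simp
  let ?S = "- set D"
  have r2: "reach ?S v1 v2" unfolding v1_def v2_def
  proof (rule reach_mono[OF R])
    show "M - {(y, r) |y. l \<le> y \<and> y \<le> h} \<subseteq> ?S"
    proof
      fix z assume z: "z \<in> M - {(y, r) |y. l \<le> y \<and> y \<le> h}"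
      obtain z1 z2 where zz: "z = (z1, z2)" by (cases z)
      show "z \<in> ?S"
      proof
        assume "z \<in> set D"
        then have A: "z2 = r \<and> l - 1 \<le> z1 \<and> z1 \<le> h + 1" using setD z zz by fastforce
        have "z1 \<noteq> l - 1" using el z zz A by auto
        moreover have "z1 \<noteq> h + 1" using er z zz A by auto
        ultimately have "z \<in> {(y, r) |y. l \<le> y \<and> y \<le> h}" using A zz by auto
        then show False using z by blast
      qed
    qed
  qed
  then have "wind D v1 = wind D v2" by (rule wind_reach[OF cl])
  then show False using neq by simp
qed


lemma rt_map: assumes "R\<^sup>*\<^sup>* a b" "\<And>x y. R x y \<Longrightarrow> R' (f x) (f y)" shows "R'\<^sup>*\<^sup>* (f a) (f b)"
  using assms(1)
proof (induction rule: rtranclp_induct)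
  case base then show ?case by simp
next
  case (step y z)
  then show ?case using assms(2)[OF step.hyps(2)] by (simp add: rtranclp.rtrancl_into_rtrancl)
qed

lemma portal_map:
  assumes fg: "\<And>x. g (f x) = x" and gf: "\<And>y. f (g y) = y"
    and ax: "\<And>u v. axis_adj q' (f u) (f v) \<longleftrightarrow> axis_adj q u v"
  shows "portal q' (f ` M) (f u) = f ` portal q M u"
proof
  let ?R = "\<lambda>a b. a \<in> M \<and> b \<in> M \<and> axis_adj q a b"
  let ?R' = "\<lambda>a b. a \<in> f ` M \<and> b \<in> f ` M \<and> axis_adj q' a b"
  show "f ` portal q M u \<subseteq> portal q' (f ` M) (f u)"
  proof
    fix w assume "w \<in> f ` portal q M u"
    then obtain v where v: "w = f v" "?R\<^sup>*\<^sup>* u v" "v \<in> M" unfolding portal_def by blast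
    have "?R'\<^sup>*\<^sup>* (f u) (f v)" by (rule rt_map[OF v(2)]) (simp add: ax)
    then show "w \<in> portal q' (f ` M) (f u)" unfolding portal_def using v by simp
  qed
  show "portal q' (f ` M) (f u) \<subseteq> f ` portal q M u"
  proof
    fix w assume "w \<in> portal q' (f ` M) (f u)"
    then have w: "?R'\<^sup>*\<^sup>* (f u) w" "w \<in> f ` M" unfolding portal_def by auto
    have gM: "\<And>x. x \<in> f ` M \<Longrightarrow> g x \<in> M" using fg by auto
    have "?R\<^sup>*\<^sup>* (g (f u)) (g w)"
    proof (rule rt_map[OF w(1)])
      fix x y assume "?R' x y"
      then show "?R (g x) (g y)" using gM ax[of "g x" "g y"] gf by simp
    qed
    then have "?R\<^sup>*\<^sup>* u (g w)" using fg by simp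
    then have "g w \<in> portal q M u" unfolding portal_def using gM[OF w(2)] by simp
    then show "w \<in> f ` portal q M u" using gf[of w] by (metis imageI)
  qed
qed

lemma reach_map:
  assumes gr: "\<And>u v. grid_adj (f u) (f v) \<longleftrightarrow> grid_adj u v"
    and "reach S u v"
  shows "reach (f ` S) (f u) (f v)"
  using assms(2) unfolding reach_def
  by (rule rt_map) (simp add: gr)

lemma induced_connected_map:
  assumes gr: "\<And>u v. grid_adj (f u) (f v) \<longleftrightarrow> grid_adj u v"
    and "induced_connected S"
  shows "induced_connected (f ` S)"
  unfolding induced_connected_def
proof (intro ballI)
  fix a b assume "a \<in> f ` S" "b \<in> f ` S"
  then obtain a' b' where ab: "a = f a'" "b = f b'" "a' \<in> S" "b' \<in> S" by blast
  have "reach S a' b'" using assms(2) ab unfolding induced_connected_def reach_def by blast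
  then have "reach (f ` S) a b" using reach_map[OF gr] ab by simp
  then show "(\<lambda>a b. a \<in> f ` S \<and> b \<in> f ` S \<and> grid_adj a b)\<^sup>*\<^sup>* a b" unfolding reach_def .
qed

lemma compl_map: assumes fg: "\<And>x. g (f x) = x" and gf: "\<And>y. f (g y) = y"
  shows "- (f ` M) = f ` (- M)"
proof
  show "- f ` M \<subseteq> f ` (- M)"
  proof
    fix y assume "y \<in> - f ` M"
    then have "g y \<notin> M" using gf by (metis ComplD imageI)
    then show "y \<in> f ` (- M)" using gf[of y] by (metis ComplI imageI)
  qed
  show "f ` (- M) \<subseteq> - f ` M" using fg by (auto, metis)
qed

lemma adj_rows:
  assumes "grid_adj (x, s) (y, r)"
  shows "(s = r + 1 \<and> (y = x \<or> y = x + 1)) \<or> (s = r - 1 \<and> (y = x \<or> y = x - 1)) \<or> (s = r \<and> (y = x + 1 \<or> y = x - 1))"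
  using assms unfolding grid_adj_cases by auto

lemma geo_aa_lt:
  assumes fin: "finite M" and conn: "induced_connected (- M)"
    and QM: "\<And>y. l \<le> y \<Longrightarrow> y \<le> h \<Longrightarrow> (y, r) \<in> M"
    and el: "(l - 1, r) \<notin> M"
    and u1: "(x1, r+1) \<in> M" and u2: "(x2, r+1) \<in> M" and lt: "x1 < x2"
    and hx1: "l - 1 \<le> x1" and hx2: "x2 \<le> h"
    and gap0: "\<exists>c. x1 < c \<and> c < x2 \<and> (c, r+1) \<notin> M"
    and R: "reach (M - {(y, r) |y. l \<le> y \<and> y \<le> h}) (x1, r+1) (x2, r+1)"
  shows False
proof -
  let ?G = "{c. x1 < c \<and> c < x2 \<and> (c, r+1) \<notin> M}"
  have finG: "finite ?G" by (rule finite_subset[of _ "{x1<..<x2}"]) auto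
  have neG: "?G \<noteq> {}" using gap0 by blast
  define c where "c = Min ?G"
  have cG: "c \<in> ?G" unfolding c_def using Min_in[OF finG neG] .
  have cmin: "\<And>y. y \<in> ?G \<Longrightarrow> c \<le> y" unfolding c_def using Min_le[OF finG] by blast
  have row1: "\<And>y. x1 \<le> y \<Longrightarrow> y \<le> c - 1 \<Longrightarrow> (y, r+1) \<in> M"
  proof -
    fix y assume y: "x1 \<le> y" "y \<le> c - 1"
    show "(y, r+1) \<in> M"
    proof (cases "y = x1")
      case True then show ?thesis using u1 by simp
    next
      case False
      show ?thesis
      proof (rule ccontr)
        assume "(y, r+1) \<notin> M"
        then have "y \<in> ?G" using y False cG by auto
        then have "c \<le> y" by (rule cmin)
        then show False using y by simp
      qed
    qed
  qed
  show False
    by (rule geo_a[OF conn QM el _ _ _ row1 u2 hx1 hx2 R]) (use cG in auto)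
qed

lemma geo_aa:
  assumes fin: "finite M" and conn: "induced_connected (- M)" and wM: "w \<in> M"
    and u1: "u1 \<in> M - portal AX M w" and u2: "u2 \<in> M - portal AX M w"
    and r1: "snd u1 = snd w + 1" and r2: "snd u2 = snd w + 1"
    and a1: "\<exists>z\<in>portal AX M w. grid_adj u1 z" and a2: "\<exists>z\<in>portal AX M w. grid_adj u2 z"
    and ne: "portal AX M u1 \<noteq> portal AX M u2"
    and R: "reach (M - portal AX M w) u1 u2"
  shows False
proof -
  obtain l h where lh: "l \<le> fst w" "fst w \<le> h" "portal AX M w = {(y, snd w) |y. l \<le> y \<and> y \<le> h}"
    "(l - 1, snd w) \<notin> M" "(h + 1, snd w) \<notin> M"
    using portalAX_interval[OF fin wM] by blast
  define r where "r = snd w"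
  define x1 where "x1 = fst u1"
  define x2 where "x2 = fst u2"
  have x1: "u1 = (x1, r+1)" using r1 unfolding r_def x1_def by (simp add: prod_eq_iff)
  have x2: "u2 = (x2, r+1)" using r2 unfolding r_def x2_def by (simp add: prod_eq_iff)
  have Q: "portal AX M w = {(y, r) |y. l \<le> y \<and> y \<le> h}" using lh(3) unfolding r_def .
  have QM: "\<And>y. l \<le> y \<Longrightarrow> y \<le> h \<Longrightarrow> (y, r) \<in> M"
  proof -
    fix y assume "l \<le> y" "y \<le> h"
    then have "(y, r) \<in> portal AX M w" unfolding Q by simp
    then show "(y, r) \<in> M" using portal_subset[of AX M w] by (rule subsetD[rotated])
  qed
  have el: "(l - 1, r) \<notin> M" using lh(4) unfolding r_def .
  obtain z where z: "z \<in> portal AX M w" "grid_adj u1 z" using a1 by blast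
  from z(1) obtain z1 where z1': "z = (z1, r)" "l \<le> z1" "z1 \<le> h" unfolding Q by blast
  have z1: "l \<le> z1" "z1 \<le> h" "grid_adj (x1, r+1) (z1, r)" using z z1' x1 by simp_all
  obtain z' where z': "z' \<in> portal AX M w" "grid_adj u2 z'" using a2 by blast
  from z'(1) obtain z2 where z2': "z' = (z2, r)" "l \<le> z2" "z2 \<le> h" unfolding Q by blast
  have z2: "l \<le> z2" "z2 \<le> h" "grid_adj (x2, r+1) (z2, r)" using z' z2' x2 by simp_all
  have hx1: "l - 1 \<le> x1" "x1 \<le> h" using adj_rows[OF z1(3)] z1 by auto
  have hx2: "l - 1 \<le> x2" "x2 \<le> h" using adj_rows[OF z2(3)] z2 by auto
  have u1M: "(x1, r+1) \<in> M" using u1 x1 by simp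
  have u2M: "(x2, r+1) \<in> M" using u2 x2 by simp
  have gap: "\<exists>c. min x1 x2 < c \<and> c < max x1 x2 \<and> (c, r+1) \<notin> M"
  proof (rule ccontr)
    assume ng: "\<not> ?thesis"
    have "\<forall>y. min x1 x2 \<le> y \<and> y \<le> max x1 x2 \<longrightarrow> (y, r+1) \<in> M"
    proof (intro allI impI)
      fix y assume y: "min x1 x2 \<le> y \<and> y \<le> max x1 x2"
      show "(y, r+1) \<in> M"
      proof (cases "y = x1 \<or> y = x2")
        case True then show ?thesis using u1M u2M by auto
      next
        case False
        then have "min x1 x2 < y" "y < max x1 x2" using y by (auto simp: min_def max_def split: if_splits)
        then show ?thesis using ng by blast
      qed
    qed
    then have "(x2, r+1) \<in> portal AX M (x1, r+1)" unfolding portalAX_char by simp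
    then have "portal AX M (x2, r+1) = portal AX M (x1, r+1)" by (rule portal_eq)
    then show False using ne x1 x2 by simp
  qed
  have RQ: "reach (M - {(y, r) |y. l \<le> y \<and> y \<le> h}) (x1, r+1) (x2, r+1)" using R Q x1 x2 by simp
  have "x1 \<noteq> x2" using ne x1 x2 by auto
  then consider "x1 < x2" | "x2 < x1" by linarith
  then show False
  proof cases
    case 1
    have mm: "min x1 x2 = x1" "max x1 x2 = x2" using 1 by simp_all
    have g: "\<exists>c. x1 < c \<and> c < x2 \<and> (c, r+1) \<notin> M" using gap unfolding mm .
    show False
      using geo_aa_lt[OF fin conn QM el u1M u2M 1 hx1(1) hx2(2) g RQ] .
  next
    case 2
    have mm: "min x1 x2 = x2" "max x1 x2 = x1" using 2 by simp_all
    have g: "\<exists>c. x2 < c \<and> c < x1 \<and> (c, r+1) \<notin> M" using gap unfolding mm .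
    show False
      using geo_aa_lt[OF fin conn QM el u2M u1M 2 hx2(1) hx1(2) g reach_sym[OF RQ]] .
  qed
qed

definition GeoBad :: "axis \<Rightarrow> node set \<Rightarrow> node \<Rightarrow> node \<Rightarrow> node \<Rightarrow> bool" where
  "GeoBad q M w u1 u2 \<longleftrightarrow> finite M \<and> induced_connected (- M) \<and> w \<in> M \<and>
     u1 \<in> M - portal q M w \<and> u2 \<in> M - portal q M w \<and>
     (\<exists>z\<in>portal q M w. grid_adj u1 z) \<and> (\<exists>z\<in>portal q M w. grid_adj u2 z) \<and>
     portal q M u1 \<noteq> portal q M u2 \<and> reach (M - portal q M w) u1 u2"

lemma GeoBad_sym: "GeoBad q M w u1 u2 \<Longrightarrow> GeoBad q M w u2 u1"
  unfolding GeoBad_def using reach_sym by metis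

lemma GeoBad_map:
  assumes fg: "\<And>x. g (f x) = x" and gf: "\<And>y. f (g y) = y"
    and gr: "\<And>u v. grid_adj (f u) (f v) \<longleftrightarrow> grid_adj u v"
    and ax: "\<And>u v. axis_adj q' (f u) (f v) \<longleftrightarrow> axis_adj q u v"
    and B: "GeoBad q M w u1 u2"
  shows "GeoBad q' (f ` M) (f w) (f u1) (f u2)"
proof -
  have inj: "inj f" using fg by (metis injI)
  have pm: "\<And>u. portal q' (f ` M) (f u) = f ` portal q M u" by (rule portal_map[OF fg gf ax])
  have dif: "\<And>A B. f ` A - f ` B = f ` (A - B)" using inj by (simp add: image_set_diff)
  from B have b: "finite M" "induced_connected (- M)" "w \<in> M"
     "u1 \<in> M - portal q M w" "u2 \<in> M - portal q M w"
     "\<exists>z\<in>portal q M w. grid_adj u1 z" "\<exists>z\<in>portal q M w. grid_adj u2 z"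
     "portal q M u1 \<noteq> portal q M u2" "reach (M - portal q M w) u1 u2"
    unfolding GeoBad_def by blast+
  have 1: "finite (f ` M)" using b(1) by simp
  have 2: "induced_connected (- (f ` M))"
    unfolding compl_map[OF fg gf] by (rule induced_connected_map[OF gr b(2)])
  have 3: "f w \<in> f ` M" using b(3) by simp
  have 4: "f u1 \<in> f ` M - portal q' (f ` M) (f w)" "f u2 \<in> f ` M - portal q' (f ` M) (f w)"
    unfolding pm dif using b(4,5) by simp_all
  have 5: "\<exists>z\<in>portal q' (f ` M) (f w). grid_adj (f u1) z" "\<exists>z\<in>portal q' (f ` M) (f w). grid_adj (f u2) z"
    unfolding pm using b(6,7) gr by auto
  have 6: "portal q' (f ` M) (f u1) \<noteq> portal q' (f ` M) (f u2)"
    unfolding pm using b(8) inj by (simp add: inj_image_eq_iff)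
  have 7: "reach (f ` M - portal q' (f ` M) (f w)) (f u1) (f u2)"
    unfolding pm dif by (rule reach_map[OF gr b(9)])
  show ?thesis unfolding GeoBad_def using 1 2 3 4 5 6 7 by blast
qed

lemma geo_aa': "GeoBad AX M w u1 u2 \<Longrightarrow> snd u1 = snd w + 1 \<Longrightarrow> snd u2 = snd w + 1 \<Longrightarrow> False"
  unfolding GeoBad_def using geo_aa by blast

definition tau :: "node \<Rightarrow> node" where "tau p = (- fst p, - snd p)"

lemma tau_inv: "tau (tau p) = p" unfolding tau_def by simp

lemma tau_grid: "grid_adj (tau u) (tau v) \<longleftrightarrow> grid_adj u v"
  by (cases u; cases v) (auto simp: tau_def grid_adj_cases)

lemma tau_ax: "axis_adj AX (tau u) (tau v) \<longleftrightarrow> axis_adj AX u v"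
  by (cases u; cases v) (auto simp: tau_def abs_minus_commute)

lemma geo_bb': "GeoBad AX M w u1 u2 \<Longrightarrow> snd u1 = snd w - 1 \<Longrightarrow> snd u2 = snd w - 1 \<Longrightarrow> False"
proof -
  assume B: "GeoBad AX M w u1 u2" "snd u1 = snd w - 1" "snd u2 = snd w - 1"
  have "GeoBad AX (tau ` M) (tau w) (tau u1) (tau u2)"
    by (rule GeoBad_map[OF tau_inv tau_inv tau_grid tau_ax B(1)])
  moreover have "snd (tau u1) = snd (tau w) + 1" "snd (tau u2) = snd (tau w) + 1"
    using B(2,3) unfolding tau_def by simp_all
  ultimately show False using geo_aa' by blast
qed

lemma geo_cc':
  assumes B: "GeoBad AX M w u1 u2" and r1: "snd u1 = snd w + 1" and r2: "snd u2 = snd w - 1"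
  shows False
proof -
  from B have fin: "finite M" and conn: "induced_connected (- M)" and wM: "w \<in> M"
    and u1: "u1 \<in> M - portal AX M w" and u2: "u2 \<in> M - portal AX M w"
    and a1: "\<exists>z\<in>portal AX M w. grid_adj u1 z" and a2: "\<exists>z\<in>portal AX M w. grid_adj u2 z"
    and R: "reach (M - portal AX M w) u1 u2"
    unfolding GeoBad_def by blast+
  obtain l h where lh: "l \<le> fst w" "fst w \<le> h" "portal AX M w = {(y, snd w) |y. l \<le> y \<and> y \<le> h}"
    "(l - 1, snd w) \<notin> M" "(h + 1, snd w) \<notin> M"
    using portalAX_interval[OF fin wM] by blast
  define r where "r = snd w"
  define x1 where "x1 = fst u1"
  define x2 where "x2 = fst u2"
  have x1: "u1 = (x1, r+1)" using r1 unfolding r_def x1_def by (simp add: prod_eq_iff)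
  have x2: "u2 = (x2, r-1)" using r2 unfolding r_def x2_def by (simp add: prod_eq_iff)
  have Q: "portal AX M w = {(y, r) |y. l \<le> y \<and> y \<le> h}" using lh(3) unfolding r_def .
  have QM: "\<And>y. l \<le> y \<Longrightarrow> y \<le> h \<Longrightarrow> (y, r) \<in> M"
  proof -
    fix y assume "l \<le> y" "y \<le> h"
    then have "(y, r) \<in> portal AX M w" unfolding Q by simp
    then show "(y, r) \<in> M" using portal_subset[of AX M w] by (rule subsetD[rotated])
  qed
  have el: "(l - 1, r) \<notin> M" using lh(4) unfolding r_def .
  have er: "(h + 1, r) \<notin> M" using lh(5) unfolding r_def .
  have lh': "l \<le> h" using lh(1,2) by simp
  obtain z where z: "z \<in> portal AX M w" "grid_adj u1 z" using a1 by blast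
  from z(1) obtain z1 where z1': "z = (z1, r)" "l \<le> z1" "z1 \<le> h" unfolding Q by blast
  have z1: "l \<le> z1" "z1 \<le> h" "grid_adj (x1, r+1) (z1, r)" using z z1' x1 by simp_all
  obtain z' where z': "z' \<in> portal AX M w" "grid_adj u2 z'" using a2 by blast
  from z'(1) obtain z2 where z2': "z' = (z2, r)" "l \<le> z2" "z2 \<le> h" unfolding Q by blast
  have z2: "l \<le> z2" "z2 \<le> h" "grid_adj (x2, r-1) (z2, r)" using z' z2' x2 by simp_all
  have hx1: "l - 1 \<le> x1" "x1 \<le> h" using adj_rows[OF z1(3)] z1 by auto
  have hx2: "l \<le> x2" "x2 \<le> h + 1" using adj_rows[OF z2(3)] z2 by auto
  have u1M: "(x1, r+1) \<in> M" using u1 x1 by simp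
  have u2M: "(x2, r-1) \<in> M" using u2 x2 by simp
  have RQ: "reach (M - {(y, r) |y. l \<le> y \<and> y \<le> h}) (x1, r+1) (x2, r-1)" using R Q x1 x2 by simp
  show False using geo_c[OF conn QM el er lh' u1M u2M hx1 hx2 RQ] .
qed

lemma geo_AX: assumes B: "GeoBad AX M w u1 u2" shows False
proof -
  have rows: "\<And>u. u \<in> M - portal AX M w \<Longrightarrow> (\<exists>z\<in>portal AX M w. grid_adj u z) \<Longrightarrow>
      snd u = snd w + 1 \<or> snd u = snd w - 1"
  proof -
    fix u assume u: "u \<in> M - portal AX M w" and a: "\<exists>z\<in>portal AX M w. grid_adj u z"
    from B have fin: "finite M" and wM: "w \<in> M" unfolding GeoBad_def by blast+
    obtain l h where lh: "l \<le> fst w" "fst w \<le> h" "portal AX M w = {(y, snd w) |y. l \<le> y \<and> y \<le> h}"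
      "(l - 1, snd w) \<notin> M" "(h + 1, snd w) \<notin> M"
      using portalAX_interval[OF fin wM] by blast
    obtain z where z: "z \<in> portal AX M w" "grid_adj u z" using a by blast
    from z(1) obtain z1 where z1: "z = (z1, snd w)" "l \<le> z1" "z1 \<le> h" unfolding lh(3) by blast
    obtain x s where us: "u = (x, s)" by (cases u)
    have ad: "grid_adj (x, s) (z1, snd w)" using z(2) z1 us by simp
    show "snd u = snd w + 1 \<or> snd u = snd w - 1"
    proof (rule ccontr)
      assume "\<not> ?thesis"
      then have "s = snd w" "x = z1 - 1 \<or> x = z1 + 1" using adj_rows[OF ad] us by auto
      moreover have "(x, s) \<notin> portal AX M w" using u us by simp
      ultimately have "x = l - 1 \<or> x = h + 1" unfolding lh(3) using z1 by auto
      then have "(x, s) \<notin> M" using lh(4,5) \<open>s = snd w\<close> by auto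
      then show False using u us by simp
    qed
  qed
  from B have u1: "u1 \<in> M - portal AX M w" "\<exists>z\<in>portal AX M w. grid_adj u1 z"
    and u2: "u2 \<in> M - portal AX M w" "\<exists>z\<in>portal AX M w. grid_adj u2 z"
    unfolding GeoBad_def by blast+
  have B': "GeoBad AX M w u2 u1" using GeoBad_sym[OF B] .
  from rows[OF u1] rows[OF u2] show False
    using geo_aa'[OF B] geo_bb'[OF B] geo_cc'[OF B] geo_cc'[OF B'] by linarith
qed

fun phi :: "axis \<Rightarrow> node \<Rightarrow> node" where
  "phi AX p = p"
| "phi AY p = (snd p, fst p)"
| "phi AZ p = (- fst p, fst p + snd p)"

fun psi :: "axis \<Rightarrow> node \<Rightarrow> node" where
  "psi AX p = p"
| "psi AY p = (snd p, fst p)"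
| "psi AZ p = (- fst p, fst p + snd p)"

lemma psi_phi: "psi q (phi q p) = p" by (cases q) auto
lemma phi_psi: "phi q (psi q p) = p" by (cases q) auto

lemma phi_grid: "grid_adj (phi q u) (phi q v) \<longleftrightarrow> grid_adj u v"
  by (cases q; cases u; cases v) (auto simp: grid_adj_cases)

lemma phi_ax: "axis_adj AX (phi q u) (phi q v) \<longleftrightarrow> axis_adj q u v"
  by (cases q; cases u; cases v) (auto simp: abs1)

lemma geo_general: assumes B: "GeoBad q M w u1 u2" shows False
  using geo_AX[OF GeoBad_map[OF psi_phi phi_psi phi_grid phi_ax B]] .


lemma chain_rtranclp: "chain R xs \<Longrightarrow> xs \<noteq> [] \<Longrightarrow> R\<^sup>*\<^sup>* (hd xs) (last xs)"
proof (induction R xs rule: chain.induct)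
  case (1 R a b xs)
  then have "R a b" "R\<^sup>*\<^sup>* b (last (b # xs))" by auto
  then show ?case by (simp add: converse_rtranclp_into_rtranclp)
qed auto

lemma symp_rtranclp_sym: assumes "\<And>x y. R x y \<Longrightarrow> R y x" "R\<^sup>*\<^sup>* a b" shows "R\<^sup>*\<^sup>* b a"
  using assms(2)
proof (induction rule: rtranclp_induct)
  case base then show ?case by simp
next
  case (step y z)
  then show ?case using assms(1) by (metis converse_rtranclp_into_rtranclp)
qed

lemma portal_adj_sym: "portal_adj q M A B \<Longrightarrow> portal_adj q M B A"
  unfolding portal_adj_def using grid_adj_sym by blast

lemma relpowp_sym: assumes "\<And>x y. R x y \<Longrightarrow> R y x" "(R ^^ n) a b" shows "(R ^^ n) b a"
proof -
  obtain f where f: "f 0 = a" "f n = b" "\<forall>i<n. R (f i) (f (Suc i))"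
    using assms(2) unfolding relpowp_fun_conv by blast
  define g where "g = (\<lambda>i. f (n - i))"
  have "g 0 = b" "g n = a" using f g_def by simp_all
  moreover have "\<forall>i<n. R (g i) (g (Suc i))"
  proof (intro allI impI)
    fix i assume i: "i < n"
    have "R (f (n - Suc i)) (f (Suc (n - Suc i)))" using f(3) i by simp
    moreover have "Suc (n - Suc i) = n - i" using i by simp
    ultimately show "R (g i) (g (Suc i))" unfolding g_def using assms(1) by simp
  qed
  ultimately show ?thesis unfolding relpowp_fun_conv by blast
qed

lemma reach_in_portal: assumes "u \<in> M" "x \<in> portal q M u" shows "reach (portal q M u) u x"
proof -
  let ?R = "\<lambda>a b. a \<in> M \<and> b \<in> M \<and> axis_adj q a b"
  have "?R\<^sup>*\<^sup>* u x" using assms(2) unfolding portal_def by simp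
  then show ?thesis
  proof (induction rule: rtranclp_induct)
    case base then show ?case by (simp add: reach_def)
  next
    case (step y z)
    have yP: "y \<in> portal q M u" using step.hyps(1) step.hyps(2) unfolding portal_def by simp
    have zP: "z \<in> portal q M u" using step.hyps unfolding portal_def
      by (simp add: rtranclp.rtrancl_into_rtrancl)
    have "grid_adj y z" using step.hyps(2) unfolding grid_adj_def by blast
    then have "reach (portal q M u) y z" using yP zP by (rule reach_step[rotated 2])
    then show ?case using step.IH by (rule reach_trans[rotated])
  qed
qed

lemma reach_portal_pair: assumes "is_portal q M X" "x \<in> X" "y \<in> X" shows "reach X x y"
proof -
  obtain u where u: "u \<in> M" "X = portal q M u" using assms(1) unfolding is_portal_def by blast
  show ?thesis using reach_in_portal[OF u(1), of y q] reach_in_portal[OF u(1), of x q] assms u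
    by (metis reach_sym reach_trans)
qed

lemma portal_in: "u \<in> M \<Longrightarrow> is_portal q M (portal q M u)"
  unfolding is_portal_def by blast

lemma is_portal_eq: "is_portal q M X \<Longrightarrow> x \<in> X \<Longrightarrow> portal q M x = X"
  unfolding is_portal_def using portal_eq by blast

lemma is_portal_sub: "is_portal q M X \<Longrightarrow> X \<subseteq> M"
  unfolding is_portal_def using portal_subset by blast

lemma portals_disjoint: "is_portal q M X \<Longrightarrow> is_portal q M Y \<Longrightarrow> x \<in> X \<Longrightarrow> x \<in> Y \<Longrightarrow> X = Y"
  using is_portal_eq by metis

definition AV :: "axis \<Rightarrow> node set \<Rightarrow> node set \<Rightarrow> node set \<Rightarrow> node set \<Rightarrow> bool" where
  "AV q M Z X Y \<longleftrightarrow> portal_adj q M X Y \<and> X \<noteq> Z \<and> Y \<noteq> Z"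

lemma AV_sym: "AV q M Z X Y \<Longrightarrow> AV q M Z Y X"
  unfolding AV_def using portal_adj_sym by blast

lemma reach_to_AV:
  assumes "reach (M - Z) u v" "u \<in> M - Z"
  shows "(AV q M Z)\<^sup>*\<^sup>* (portal q M u) (portal q M v)"
  using assms(1) unfolding reach_def
proof (induction rule: rtranclp_induct)
  case base then show ?case by simp
next
  case (step y z)
  have yz: "y \<in> M - Z" "z \<in> M - Z" "grid_adj y z" using step.hyps(2) by auto
  have "portal q M y = portal q M z \<or> AV q M Z (portal q M y) (portal q M z)"
  proof (cases "portal q M y = portal q M z")
    case False
    have "portal_adj q M (portal q M y) (portal q M z)"
      unfolding portal_adj_def using False yz portal_in portal_self by blast
    moreover have "portal q M y \<noteq> Z" "portal q M z \<noteq> Z" using yz portal_self by blast+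
    ultimately show ?thesis unfolding AV_def by blast
  qed simp
  then show ?case using step.IH by (metis rtranclp.rtrancl_into_rtrancl)
qed

lemma AV_to_reach:
  assumes "(AV q M Z)\<^sup>*\<^sup>* X Y" "is_portal q M X" "X \<noteq> Z" "is_portal q M Z"
  shows "\<forall>x\<in>X. \<forall>y\<in>Y. reach (M - Z) x y"
  using assms(1)
proof (induction rule: rtranclp_induct)
  case base
  have "X \<subseteq> M - Z" using assms(2,3,4) is_portal_sub portals_disjoint by blast
  then show ?case using reach_portal_pair[OF assms(2)] reach_mono by blast
next
  case (step Y Y')
  have YY: "portal_adj q M Y Y'" "Y \<noteq> Z" "Y' \<noteq> Z" using step.hyps(2) unfolding AV_def by auto
  obtain a b where ab: "a \<in> Y" "b \<in> Y'" "grid_adj a b" using YY(1) unfolding portal_adj_def by blast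
  have pY: "is_portal q M Y" "is_portal q M Y'" using YY(1) unfolding portal_adj_def by auto
  have subY: "Y \<subseteq> M - Z" using pY(1) YY(2) assms(4) is_portal_sub portals_disjoint by blast
  have subY': "Y' \<subseteq> M - Z" using pY(2) YY(3) assms(4) is_portal_sub portals_disjoint by blast
  show ?case
  proof (intro ballI)
    fix x y assume x: "x \<in> X" and y: "y \<in> Y'"
    have "reach (M - Z) x a" using step.IH x ab(1) by blast
    moreover have "reach (M - Z) a b" using ab subY subY' by (intro reach_step) auto
    moreover have "reach (M - Z) b y" using reach_portal_pair[OF pY(2) ab(2) y] subY' by (rule reach_mono)
    ultimately show "reach (M - Z) x y" using reach_trans by metis
  qed
qed

lemma lemmaS:
  assumes simple: "simple_tri_grid_graph M"
    and Z: "is_portal q M Z" and ZX: "portal_adj q M Z X" and ZY: "portal_adj q M Z Y"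
    and XY: "X \<noteq> Y" and W: "(AV q M Z)\<^sup>*\<^sup>* X Y"
  shows False
proof -
  have fin: "finite M" and conn: "induced_connected (- M)"
    using simple unfolding simple_tri_grid_graph_def tri_grid_graph_def by auto
  obtain w where w: "w \<in> M" "Z = portal q M w" using Z unfolding is_portal_def by blast
  obtain a1 u1 where a1: "a1 \<in> Z" "u1 \<in> X" "grid_adj a1 u1" using ZX unfolding portal_adj_def by blast
  obtain a2 u2 where a2: "a2 \<in> Z" "u2 \<in> Y" "grid_adj a2 u2" using ZY unfolding portal_adj_def by blast
  have pX: "is_portal q M X" "X \<noteq> Z" using ZX unfolding portal_adj_def by auto
  have pY: "is_portal q M Y" "Y \<noteq> Z" using ZY unfolding portal_adj_def by auto
  have u1: "u1 \<in> M - portal q M w" using a1 pX Z w is_portal_sub portals_disjoint by blast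
  have u2: "u2 \<in> M - portal q M w" using a2 pY Z w is_portal_sub portals_disjoint by blast
  have adj1: "\<exists>z\<in>portal q M w. grid_adj u1 z" using a1 w grid_adj_sym by blast
  have adj2: "\<exists>z\<in>portal q M w. grid_adj u2 z" using a2 w grid_adj_sym by blast
  have ne: "portal q M u1 \<noteq> portal q M u2"
    using is_portal_eq[OF pX(1) a1(2)] is_portal_eq[OF pY(1) a2(2)] XY by simp
  have R: "reach (M - portal q M w) u1 u2"
    using AV_to_reach[OF W pX Z] a1(2) a2(2) w by blast
  have "GeoBad q M w u1 u2" unfolding GeoBad_def
    using fin conn w(1) u1 u2 adj1 adj2 ne R by blast
  then show False by (rule geo_general)
qed


definition pdist :: "axis \<Rightarrow> node set \<Rightarrow> node set \<Rightarrow> node set \<Rightarrow> nat" where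
  "pdist q M A B = (LEAST n. (portal_adj q M ^^ n) A B)"

lemma qdist_pdist: "qdist q M u v = pdist q M (portal q M u) (portal q M v)"
  unfolding qdist_def pdist_def ..

lemma pdist_walk: "(portal_adj q M ^^ n) A B \<Longrightarrow> (portal_adj q M ^^ pdist q M A B) A B"
  unfolding pdist_def by (rule LeastI)

lemma pdist_le: "(portal_adj q M ^^ n) A B \<Longrightarrow> pdist q M A B \<le> n"
  unfolding pdist_def by (rule Least_le)

lemma pdist_sym: assumes "(portal_adj q M ^^ n) A B" shows "pdist q M A B = pdist q M B A"
proof -
  have w1: "(portal_adj q M ^^ pdist q M A B) A B" by (rule pdist_walk[OF assms])
  have w2: "(portal_adj q M ^^ pdist q M A B) B A" by (rule relpowp_sym[OF portal_adj_sym w1])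
  have w3: "(portal_adj q M ^^ pdist q M B A) B A" by (rule pdist_walk[OF w2])
  have w4: "(portal_adj q M ^^ pdist q M B A) A B" by (rule relpowp_sym[OF portal_adj_sym w3])
  show ?thesis using pdist_le[OF w2] pdist_le[OF w4] by simp
qed

lemma connected_portals:
  assumes simple: "simple_tri_grid_graph M" and u: "u \<in> M" and v: "v \<in> M"
  shows "\<exists>n. (portal_adj q M ^^ n) (portal q M u) (portal q M v)"
proof -
  have "induced_connected M" using simple unfolding simple_tri_grid_graph_def tri_grid_graph_def by simp
  then have "reach M u v" using u v unfolding induced_connected_def reach_def by blast
  then have "reach (M - {}) u v" by simp
  then have "(AV q M {})\<^sup>*\<^sup>* (portal q M u) (portal q M v)" using reach_to_AV u by blast
  then have "(portal_adj q M)\<^sup>*\<^sup>* (portal q M u) (portal q M v)"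
    by (rule rtranclp_mono[THEN predicate2D, rotated]) (auto simp: AV_def)
  then show ?thesis unfolding rtranclp_power .
qed

lemma triangle:
  assumes "(portal_adj q M ^^ n1) A X" "(portal_adj q M ^^ n2) X B"
  shows "pdist q M A B \<le> pdist q M A X + pdist q M X B"
proof -
  have "(portal_adj q M ^^ pdist q M A X) A X" by (rule pdist_walk[OF assms(1)])
  moreover have "(portal_adj q M ^^ pdist q M X B) X B" by (rule pdist_walk[OF assms(2)])
  ultimately have "(portal_adj q M ^^ (pdist q M A X + pdist q M X B)) A B"
    unfolding relpowp_add by blast
  then show ?thesis by (rule pdist_le)
qed

lemma walk_dist:
  assumes f: "f 0 = A" "f d = B" "\<forall>i<d. portal_adj q M (f i) (f (Suc i))"
    and d: "d = pdist q M A B" and i: "i \<le> d"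
  shows "pdist q M A (f i) = i \<and> pdist q M (f i) B = d - i"
proof -
  have w1: "(portal_adj q M ^^ i) A (f i)"
    unfolding relpowp_fun_conv using f i by (intro exI[of _ f]) auto
  have w2: "(portal_adj q M ^^ (d - i)) (f i) B"
    unfolding relpowp_fun_conv using f i by (intro exI[of _ "\<lambda>j. f (i + j)"]) auto
  have "d \<le> pdist q M A (f i) + pdist q M (f i) B" using triangle[OF w1 w2] d by simp
  then show ?thesis using pdist_le[OF w1] pdist_le[OF w2] i by linarith
qed

lemma no_avoid:
  assumes simple: "simple_tri_grid_graph M"
    and f: "f 0 = A" "f d = B" "\<forall>i<d. portal_adj q M (f i) (f (Suc i))"
    and d: "d = pdist q M A B" and i: "0 < i" "i < d"
  shows "\<not> (AV q M (f i))\<^sup>*\<^sup>* A B"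
proof
  assume W: "(AV q M (f i))\<^sup>*\<^sup>* A B"
  let ?Z = "f i"
  have dist: "\<And>j. j \<le> d \<Longrightarrow> pdist q M A (f j) = j" using walk_dist[OF f d] by blast
  have neq: "\<And>j. j \<le> d \<Longrightarrow> j \<noteq> i \<Longrightarrow> f j \<noteq> ?Z"
  proof
    fix j assume j: "j \<le> d" "j \<noteq> i" "f j = f i"
    have "pdist q M A (f j) = j" using dist[OF j(1)] .
    moreover have "pdist q M A (f i) = i" using dist i by simp
    ultimately show False using j by simp
  qed
  have ZY: "portal_adj q M ?Z (f (Suc i))" using f(3) i by simp
  have Z: "is_portal q M ?Z" using ZY unfolding portal_adj_def by blast
  have "i - 1 < d" using i by simp
  then have "portal_adj q M (f (i - 1)) (f (Suc (i - 1)))" using f(3) by blast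
  then have "portal_adj q M (f (i - 1)) ?Z" using i by simp
  then have ZX: "portal_adj q M ?Z (f (i - 1))" by (rule portal_adj_sym)
  have XY: "f (i - 1) \<noteq> f (Suc i)"
  proof
    assume e: "f (i - 1) = f (Suc i)"
    have "pdist q M A (f (i - 1)) = i - 1" using dist i by simp
    moreover have "pdist q M A (f (Suc i)) = Suc i" using dist i by simp
    ultimately show False using e i by simp
  qed
  have AVstep: "\<And>j. Suc j \<le> d \<Longrightarrow> j \<noteq> i \<Longrightarrow> Suc j \<noteq> i \<Longrightarrow> AV q M ?Z (f j) (f (Suc j))"
  proof -
    fix j assume j: "Suc j \<le> d" "j \<noteq> i" "Suc j \<noteq> i"
    have "portal_adj q M (f j) (f (Suc j))" using f(3) j(1) by simp
    moreover have "f j \<noteq> ?Z" using neq j by simp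
    moreover have "f (Suc j) \<noteq> ?Z" using neq[of "Suc j"] j by simp
    ultimately show "AV q M ?Z (f j) (f (Suc j))" unfolding AV_def by simp
  qed
  have left: "\<And>j. j \<le> i - 1 \<Longrightarrow> (AV q M ?Z)\<^sup>*\<^sup>* A (f j)"
  proof -
    fix j show "j \<le> i - 1 \<Longrightarrow> (AV q M ?Z)\<^sup>*\<^sup>* A (f j)"
    proof (induction j)
      case 0 then show ?case using f(1) by simp
    next
      case (Suc j)
      have "AV q M ?Z (f j) (f (Suc j))" using AVstep Suc.prems i by simp
      then show ?case using Suc by (simp add: rtranclp.rtrancl_into_rtrancl)
    qed
  qed
  have right: "\<And>k. Suc i + k \<le> d \<Longrightarrow> (AV q M ?Z)\<^sup>*\<^sup>* (f (Suc i)) (f (Suc i + k))"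
  proof -
    fix k show "Suc i + k \<le> d \<Longrightarrow> (AV q M ?Z)\<^sup>*\<^sup>* (f (Suc i)) (f (Suc i + k))"
    proof (induction k)
      case 0 then show ?case by simp
    next
      case (Suc k)
      have "AV q M ?Z (f (Suc i + k)) (f (Suc (Suc i + k)))" using AVstep Suc.prems by simp
      then show ?case using Suc by (simp add: rtranclp.rtrancl_into_rtrancl)
    qed
  qed
  have 1: "(AV q M ?Z)\<^sup>*\<^sup>* (f (i - 1)) A"
    using symp_rtranclp_sym[of "AV q M ?Z", OF _ left[OF order_refl]] AV_sym by blast
  have 2: "(AV q M ?Z)\<^sup>*\<^sup>* B (f (Suc i))"
  proof -
    have "(AV q M ?Z)\<^sup>*\<^sup>* (f (Suc i)) (f (Suc i + (d - Suc i)))" using right[of "d - Suc i"] i by simp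
    then have "(AV q M ?Z)\<^sup>*\<^sup>* (f (Suc i)) B" using i f(2) by simp
    then show ?thesis using symp_rtranclp_sym[of "AV q M ?Z"] AV_sym by blast
  qed
  have "(AV q M ?Z)\<^sup>*\<^sup>* (f (i - 1)) (f (Suc i))"
    using rtranclp_trans[OF rtranclp_trans[OF 1 W] 2] .
  then show False using lemmaS[OF simple Z ZX ZY XY] by blast
qed

lemma key_fwd:
  assumes simple: "simple_tri_grid_graph M"
    and f: "f 0 = A" "f d = B" "\<forall>i<d. portal_adj q M (f i) (f (Suc i))"
    and d: "d = pdist q M A B" and m: "m \<le> d"
    and w1: "(portal_adj q M ^^ m) A V" and w2: "(portal_adj q M ^^ (d - m)) V B"
  shows "V = f m"
proof -
  obtain f1 where f1: "f1 0 = A" "f1 m = V" "\<forall>i<m. portal_adj q M (f1 i) (f1 (Suc i))"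
    using w1 unfolding relpowp_fun_conv by blast
  obtain f2 where f2: "f2 0 = V" "f2 (d - m) = B" "\<forall>i<d - m. portal_adj q M (f2 i) (f2 (Suc i))"
    using w2 unfolding relpowp_fun_conv by blast
  define h where "h = (\<lambda>j. if j \<le> m then f1 j else f2 (j - m))"
  have h0: "h 0 = A" using f1 h_def by simp
  have hd: "h d = B"
  proof (cases "d \<le> m")
    case True
    then have "d = m" using m by simp
    then show ?thesis using f1 f2 h_def by simp
  next
    case False then show ?thesis using f2 h_def by simp
  qed
  have hm: "h m = V" using f1 h_def by simp
  have hs: "\<forall>j<d. portal_adj q M (h j) (h (Suc j))"
  proof (intro allI impI)
    fix j assume j: "j < d"
    consider "Suc j \<le> m" | "j = m" | "m < j" by linarith
    then show "portal_adj q M (h j) (h (Suc j))"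
    proof cases
      case 1 then show ?thesis using f1(3) h_def by simp
    next
      case 2
      then have "portal_adj q M (f2 0) (f2 (Suc 0))" using f2(3) j by simp
      then show ?thesis using 2 f1(2) f2(1) h_def by simp
    next
      case 3
      then have "j - m < d - m" using j by simp
      then have "portal_adj q M (f2 (j - m)) (f2 (Suc (j - m)))" using f2(3) by blast
      moreover have "Suc (j - m) = Suc j - m" using 3 by simp
      ultimately show ?thesis using 3 h_def by simp
    qed
  qed
  have hdist: "\<And>j. j \<le> d \<Longrightarrow> pdist q M A (h j) = j" using walk_dist[OF h0 hd hs d] by blast
  have fdist: "\<And>j. j \<le> d \<Longrightarrow> pdist q M A (f j) = j" using walk_dist[OF f d] by blast
  have ex: "\<exists>j\<le>d. h j = f m"
  proof (cases "m = 0 \<or> m = d")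
    case True
    then show ?thesis
    proof
      assume "m = 0" then show ?thesis using h0 f(1) by (intro exI[of _ 0]) simp
    next
      assume "m = d" then show ?thesis using hd f(2) by (intro exI[of _ d]) simp
    qed
  next
    case False
    then have mm: "0 < m" "m < d" using m by auto
    show ?thesis
    proof (rule ccontr)
      assume "\<not> ?thesis"
      then have nz: "\<And>j. j \<le> d \<Longrightarrow> h j \<noteq> f m" by blast
      have "\<And>j. j \<le> d \<Longrightarrow> (AV q M (f m))\<^sup>*\<^sup>* A (h j)"
      proof -
        fix j show "j \<le> d \<Longrightarrow> (AV q M (f m))\<^sup>*\<^sup>* A (h j)"
        proof (induction j)
          case 0 then show ?case using h0 by simp
        next
          case (Suc j)
          have "portal_adj q M (h j) (h (Suc j))" using hs Suc.prems by simp
          moreover have "h j \<noteq> f m" "h (Suc j) \<noteq> f m" using nz Suc.prems by simp_all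
          ultimately have "AV q M (f m) (h j) (h (Suc j))" unfolding AV_def by simp
          then show ?case using Suc by (simp add: rtranclp.rtrancl_into_rtrancl)
        qed
      qed
      then have "(AV q M (f m))\<^sup>*\<^sup>* A B" using hd by (metis order_refl)
      then show False using no_avoid[OF simple f d mm] by blast
    qed
  qed
  then obtain j where j: "j \<le> d" "h j = f m" by blast
  have "j = m" using hdist[OF j(1)] fdist[OF m] j(2) by simp
  then show ?thesis using j(2) hm by simp
qed

theorem mainTheorem3:
  fixes M :: "node set" and g g' :: node and q :: axis
  assumes "simple_tri_grid_graph M" and "g \<in> M" and "g' \<in> M"
  defines "d \<equiv> qdist q M g g'"
  defines "P \<equiv> {v \<in> M. qdist q M g v = (d + 1) div 2 \<and> qdist q M g' v = d div 2}"
  shows "is_portal q M P \<and> (\<forall>p. grid_path M g g' p \<longrightarrow> (\<exists>v\<in>set p. v \<in> P))"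
proof -
  note simple = assms(1)
  define A where "A = portal q M g"
  define B where "B = portal q M g'"
  have dAB: "d = pdist q M A B" unfolding d_def A_def B_def qdist_pdist ..
  obtain n0 where "(portal_adj q M ^^ n0) A B"
    using connected_portals[OF simple assms(2,3)] unfolding A_def B_def by blast
  then have "(portal_adj q M ^^ d) A B" unfolding dAB by (rule pdist_walk)
  then obtain f where f: "f 0 = A" "f d = B" "\<forall>i<d. portal_adj q M (f i) (f (Suc i))"
    unfolding relpowp_fun_conv by blast
  define m where "m = (d + 1) div 2"
  have md: "m \<le> d" "d div 2 = d - m" unfolding m_def by auto
  define Z where "Z = f m"
  have fdist: "\<And>j. j \<le> d \<Longrightarrow> pdist q M A (f j) = j \<and> pdist q M (f j) B = d - j"
    using walk_dist[OF f dAB] by blast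
  have Zp: "is_portal q M Z"
  proof (cases "m < d")
    case True
    then have "portal_adj q M (f m) (f (Suc m))" using f(3) by blast
    then show ?thesis unfolding Z_def portal_adj_def by blast
  next
    case False
    then have mD: "m = d" using md by simp
    show ?thesis
    proof (cases "d = 0")
      case True
      then show ?thesis using mD f(1) Z_def A_def portal_in[OF assms(2)] by simp
    next
      case False
      then have "d - 1 < d" by simp
      then have "portal_adj q M (f (d - 1)) (f (Suc (d - 1)))" using f(3) by blast
      then have "portal_adj q M (f (d - 1)) (f d)" using False by simp
      then show ?thesis unfolding Z_def mD portal_adj_def by blast
    qed
  qed
  have wZB: "(portal_adj q M ^^ (d - m)) Z B"
    unfolding relpowp_fun_conv Z_def using f md by (intro exI[of _ "\<lambda>j. f (m + j)"]) auto
  have key: "\<And>v. v \<in> M \<Longrightarrow>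
     (pdist q M A (portal q M v) = m \<and> pdist q M B (portal q M v) = d div 2) \<longleftrightarrow> portal q M v = Z"
  proof -
    fix v assume v: "v \<in> M"
    show "(pdist q M A (portal q M v) = m \<and> pdist q M B (portal q M v) = d div 2) \<longleftrightarrow> portal q M v = Z"
    proof
      assume H: "pdist q M A (portal q M v) = m \<and> pdist q M B (portal q M v) = d div 2"
      obtain n1 where n1: "(portal_adj q M ^^ n1) A (portal q M v)"
        using connected_portals[OF simple assms(2) v] unfolding A_def by blast
      obtain n2 where n2: "(portal_adj q M ^^ n2) B (portal q M v)"
        using connected_portals[OF simple assms(3) v] unfolding B_def by blast
      have w1: "(portal_adj q M ^^ m) A (portal q M v)" using pdist_walk[OF n1] H by simp
      have w2': "(portal_adj q M ^^ (d - m)) B (portal q M v)" using pdist_walk[OF n2] H md by simp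
      have w2: "(portal_adj q M ^^ (d - m)) (portal q M v) B"
        using relpowp_sym[OF portal_adj_sym w2'] .
      show "portal q M v = Z" unfolding Z_def by (rule key_fwd[OF simple f dAB md(1) w1 w2])
    next
      assume H: "portal q M v = Z"
      have "pdist q M A Z = m" using fdist[OF md(1)] Z_def by simp
      moreover have "pdist q M B Z = d - m"
        using fdist[OF md(1)] pdist_sym[OF wZB] Z_def by simp
      ultimately show "pdist q M A (portal q M v) = m \<and> pdist q M B (portal q M v) = d div 2"
        using H md by simp
    qed
  qed
  have PZ: "P = Z"
  proof
    show "P \<subseteq> Z"
    proof
      fix v assume "v \<in> P"
      then have v: "v \<in> M" "pdist q M A (portal q M v) = m" "pdist q M B (portal q M v) = d div 2"
        unfolding P_def m_def qdist_pdist A_def B_def by auto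
      then have "portal q M v = Z" using key by blast
      then show "v \<in> Z" using portal_self[OF v(1), of q] by simp
    qed
  next
    show "Z \<subseteq> P"
    proof
      fix v assume vZ: "v \<in> Z"
      have v: "v \<in> M" using is_portal_sub[OF Zp] vZ by blast
      have "portal q M v = Z" using is_portal_eq[OF Zp vZ] .
      then have "pdist q M A (portal q M v) = m \<and> pdist q M B (portal q M v) = d div 2"
        using key[OF v] by simp
      then show "v \<in> P" unfolding P_def m_def qdist_pdist A_def B_def using v by simp
    qed
  qed
  have paths: "\<forall>p. grid_path M g g' p \<longrightarrow> (\<exists>v\<in>set p. v \<in> P)"
  proof (intro allI impI)
    fix p assume gp: "grid_path M g g' p"
    show "\<exists>v\<in>set p. v \<in> P"
    proof (rule ccontr)
      assume "\<not> ?thesis"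
      then have nZ: "\<And>v. v \<in> set p \<Longrightarrow> v \<notin> Z" using PZ by blast
      have gp': "p \<noteq> [] \<and> hd p = g \<and> last p = g' \<and> set p \<subseteq> M \<and>
          (\<forall>i. Suc i < length p \<longrightarrow> grid_adj (p ! i) (p ! Suc i))"
        using gp unfolding grid_path_def .
      have p: "p \<noteq> []" "hd p = g" "last p = g'" "set p \<subseteq> M" using gp' by simp_all
      have p5: "chain grid_adj p" unfolding chain_nth using gp' by simp
      have "chain (\<lambda>a b. grid_adj a b \<and> a \<in> M - Z \<and> b \<in> M - Z) p"
      proof (rule chain_conj[OF p5], intro ballI)
        fix x assume "x \<in> set p" then show "x \<in> M - Z" using p(4) nZ by blast
      qed
      then have "chain (\<lambda>a b. a \<in> M - Z \<and> b \<in> M - Z \<and> grid_adj a b) p"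
        by (rule chain_mono) simp
      then have "(\<lambda>a b. a \<in> M - Z \<and> b \<in> M - Z \<and> grid_adj a b)\<^sup>*\<^sup>* (hd p) (last p)"
        using p(1) by (rule chain_rtranclp)
      then have R0: "reach (M - Z) g g'" unfolding reach_def using p(2,3) by simp
      have gin: "g \<in> set p" using hd_in_set[OF p(1)] p(2) by simp
      have gZ: "g \<in> M - Z" using p(4) nZ[OF gin] gin by blast
      have AVW: "(AV q M Z)\<^sup>*\<^sup>* A B" unfolding A_def B_def by (rule reach_to_AV[OF R0 gZ])
      have g'in: "g' \<in> set p" using last_in_set[OF p(1)] p(3) by simp
      have g'Z: "g' \<notin> Z" using nZ[OF g'in] .
      consider "m = 0" | "m = d" | "0 < m" "m < d" using md by linarith
      then show False
      proof cases
        case 1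
        then have "Z = A" using Z_def f(1) by simp
        then show False using gZ portal_self[OF assms(2), of q] A_def by simp
      next
        case 2
        then have "Z = B" using Z_def f(2) by simp
        then show False using g'Z portal_self[OF assms(3), of q] B_def by simp
      next
        case 3
        show False using no_avoid[OF simple f dAB 3] AVW Z_def by simp
      qed
    qed
  qed
  show ?thesis using Zp PZ paths by simp
qed


end
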